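(* Let $x,y\in X$ with $\deg(x)=\deg(y)=i$ for some positive integer $i$. If the pair $x,y$ is asymptotic (i.e. $\lim_{n\to\infty}d(T^n(x),T^n(y))=0$), then $x=y$.
   Context: Paths and cycles: a graph is $G=(V,E)$ with $V$ finite and $E\subset V\times V$. A path is a finite sequence of vertices $(u_0,\dots,u_L)$ with $(u_j,u_{j+1})\in E$; its length is $|\cdot|=L$; a cycle is a path with $u_0=u_L$. For paths where one ends where the next starts, $+$ denotes concatenation and $a\,c$ means the cycle $c$ traversed $a$ times. Construction: $G_0=(V_0,E_0)$ with $V_0=\{v_{0,0}\}$, $E_0=\{e_{0,0}\}$, $e_{0,0}=(v_{0,0},v_{0,0})$. For $n\geq1$, $G_n=(V_n,E_n)$ consists of a vertex $v_{n,0}$, the loop $e_{n,0}=(v_{n,0},v_{n,0})$, and $n$ cycles $c_{n,1},\dots,c_{n,n}$, each starting and ending at $v_{n,0}$, whose vertices other than $v_{n,0}$ are pairwise distinct (within each cycle and across cycles); $V_n$ is the set of all these vertices and $E_n$ consists of $e_{n,0}$ and the edges of the cycles. The maps $\varphi_n\colon V_{n+1}\to V_n$ and the lengths of the cycles $c_{n+1,i}$ are defined together: $\varphi_n(v_{n+1,0})=v_{n,0}$, and for each $i$ a path $P_{n,i}$ in $G_n$ from $v_{n,0}$ to $v_{n,0}$ is given; $c_{n+1,i}$ has length $|P_{n,i}|$ and $\varphi_n$ maps its $j$-th vertex to the $j$-th vertex of $P_{n,i}$ (written $\varphi_n(c_{n+1,i})=P_{n,i}$). The paths are: $P_{0,1}=10\,e_{0,0}$;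 for $n\geq1$: $P_{n,i}=e_{n,0}+2c_{n,i}+2c_{n,i+1}+\dots+2c_{n,n}+e_{n,0}$ for $2\leq i\leq n$; $P_{n,n+1}=(n+2)^2\big(\sum_{i=1}^n|c_{n,i}|\big)\,e_{n,0}$; and $P_{n,1}=(1\,e_{n,0}+2c_{n,1})+(2\,e_{n,0}+2c_{n,1})+\dots+(k_n\,e_{n,0}+2c_{n,1})+e_{n,0}+2c_{n,2}+\dots+2c_{n,n}+e_{n,0}$, where $k_n=2\big(1+\sum_{i=1}^n|c_{n,i}|\big)$. Let $X=\{x\in\prod_{n\geq0}V_n:\varphi_n(x_{n+1})=x_n\ \forall n\}$ with metric $d(x,y)=2^{-\min\{i:x_i\neq y_i\}}$ ($d(x,x)=0$); $X$ is a compact zero-dimensional metric space, and $T\colon X\to X$ defined by $T(x)=y$ iff $(x_n,y_n)\in E_n$ for all $n$ is a well-defined homeomorphism. Write $x_n$ for the $n$-th coordinate of $x$. Degree: for $v\in V_n$, $\deg(v)=+\infty$ if $v=v_{n,0}$ and $\deg(v)=i$ if $v$ is a vertex of $c_{n,i}$ different from $v_{n,0}$; for $x\in X$, $\deg(x)=\min_n\deg(x_n)$. *)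

theory Defs
  imports Complex_Main "HOL-Library.Extended_Nat"
begin

text \<open>Vertices of G_n are encoded as pairs of naturals: the centre v_{n,0} is (0,0);
  the j-th vertex (1 \<le> j < |c_{n,i}|) of the cycle c_{n,i} is (i,j).
  A path from v_{n,0} to v_{n,0} of length L is encoded as the list of its first L
  vertices u_0,...,u_{L-1} (the final vertex u_L = v_{n,0} is omitted); concatenation
  of such closed paths is then list append.\<close>

type_synonym vert = "nat \<times> nat"

definition centre :: vert where "centre = (0,0)"

text \<open>The cycle c_{n,i}, given the length function Ln i = |c_{n,i}|.\<close>
definition cyc :: "(nat \<Rightarrow> nat) \<Rightarrow> nat \<Rightarrow> vert list" where
  "cyc Ln i = centre # map (\<lambda>j. (i,j)) [1..<Ln i]"

definition rep :: "nat \<Rightarrow> vert list \<Rightarrow> vert list" where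
  "rep a c = concat (replicate a c)"

definition eloop :: "vert list" where "eloop = [centre]"

definition Path :: "nat \<Rightarrow> (nat \<Rightarrow> nat) \<Rightarrow> nat \<Rightarrow> vert list" where
  "Path n Ln i =
    (if n = 0 then (if i = 1 then rep 10 eloop else [])
     else if i = n + 1 then rep ((n+2)^2 * (\<Sum>k=1..n. Ln k)) eloop
     else if 2 \<le> i \<and> i \<le> n then
       eloop @ concat (map (\<lambda>k. rep 2 (cyc Ln k)) [i..<n+1]) @ eloop
     else if i = 1 then
       concat (map (\<lambda>a. rep a eloop @ rep 2 (cyc Ln 1)) [1..<2 * (1 + (\<Sum>k=1..n. Ln k)) + 1])
       @ eloop @ concat (map (\<lambda>k. rep 2 (cyc Ln k)) [2..<n+1]) @ eloop
     else [])"

text \<open>Cycle lengths: cyclen n i = |c_{n,i}| (meaningful for 1 \<le> i \<le> n).\<close>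
primrec cyclen :: "nat \<Rightarrow> nat \<Rightarrow> nat" where
  "cyclen 0 = (\<lambda>i. 0)"
| "cyclen (Suc n) = (\<lambda>i. length (Path n (cyclen n) i))"

definition P :: "nat \<Rightarrow> nat \<Rightarrow> vert list" where
  "P n i = Path n (cyclen n) i"

text \<open>The j-th vertex of c_{n,i}, for 0 \<le> j \<le> |c_{n,i}|.\<close>
definition cv :: "nat \<Rightarrow> nat \<Rightarrow> nat \<Rightarrow> vert" where
  "cv n i j = (if j = 0 \<or> cyclen n i \<le> j then centre else (i,j))"

definition V :: "nat \<Rightarrow> vert set" where
  "V n = {centre} \<union> {(i,j). 1 \<le> i \<and> i \<le> n \<and> 1 \<le> j \<and> j < cyclen n i}"

definition E :: "nat \<Rightarrow> (vert \<times> vert) set" where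
  "E n = {(centre, centre)} \<union>
     {(u,v). \<exists>i. 1 \<le> i \<and> i \<le> n \<and> (\<exists>j < cyclen n i. u = cv n i j \<and> v = cv n i (Suc j))}"

text \<open>phi n : V_{n+1} \<rightarrow> V_n.\<close>
definition phi :: "nat \<Rightarrow> vert \<Rightarrow> vert" where
  "phi n v = (if v = centre then centre else P n (fst v) ! snd v)"

definition X :: "(nat \<Rightarrow> vert) set" where
  "X = {x. (\<forall>n. x n \<in> V n) \<and> (\<forall>n. phi n (x (Suc n)) = x n)}"

definition dist_X :: "(nat \<Rightarrow> vert) \<Rightarrow> (nat \<Rightarrow> vert) \<Rightarrow> real" where
  "dist_X x y = (if x = y then 0 else (1/2) ^ (LEAST i. x i \<noteq> y i))"

definition T :: "(nat \<Rightarrow> vert) \<Rightarrow> (nat \<Rightarrow> vert)" where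
  "T x = (THE y. y \<in> X \<and> (\<forall>n. (x n, y n) \<in> E n))"

definition degv :: "vert \<Rightarrow> enat" where
  "degv v = (if v = centre then \<infinity> else enat (fst v))"

definition deg :: "(nat \<Rightarrow> vert) \<Rightarrow> enat" where
  "deg x = (INF n. degv (x n))"

end

theory Submission
  imports Defs
begin


declare upt_Suc[simp del]

lemma centre_eq: "centre = (0,0)" by (simp add: centre_def)

lemma P_def': "P n i = Path n (cyclen n) i" by (simp add: P_def)

lemma cyclen_Suc: "cyclen (Suc n) i = length (P n i)" by (simp add: P_def)
declare cyclen.simps(2)[simp del]

lemma len_cyc: "length (cyc Ln i) = (if Ln i = 0 then 1 else Ln i)"
  by (simp add: cyc_def)

lemma set_cyc: "set (cyc Ln k) = insert centre {(k,j)| j. 1 \<le> j \<and> j < Ln k}"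
  by (auto simp add: cyc_def)

lemma len_rep[simp]: "length (rep a c) = a * length c"
  by (simp add: rep_def length_concat sum_list_replicate)

lemma set_rep: "set (rep a c) = (if a = 0 then {} else set c)"
  by (simp add: rep_def)

lemma rep_Suc: "rep (Suc a) c = c @ rep a c" by (simp add: rep_def)
lemma rep_0[simp]: "rep 0 c = []" by (simp add: rep_def)
lemma rep_2: "rep 2 c = c @ c" by (simp add: rep_def numeral_2_eq_2)
lemma rep_1: "rep 1 c = c" by (simp add: rep_def)

lemma eloop_simps[simp]: "eloop = [centre]" "length eloop = 1" by (simp_all add: eloop_def)

lemma Path_n0: "Path 0 Ln i = (if i = 1 then rep 10 eloop else [])"
  by (simp add: Path_def)

lemma Path_top: "n \<ge> 1 \<Longrightarrow> Path n Ln (n+1) = rep ((n+2)^2 * (\<Sum>k=1..n. Ln k)) eloop"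
  by (simp add: Path_def)

lemma Path_mid: "n \<ge> 1 \<Longrightarrow> 2 \<le> i \<Longrightarrow> i \<le> n \<Longrightarrow>
   Path n Ln i = eloop @ concat (map (\<lambda>k. rep 2 (cyc Ln k)) [i..<n+1]) @ eloop"
  by (simp add: Path_def)

lemma Path_one: "n \<ge> 1 \<Longrightarrow>
   Path n Ln 1 = concat (map (\<lambda>a. rep a eloop @ rep 2 (cyc Ln 1)) [1..<2 * (1 + (\<Sum>k=1..n. Ln k)) + 1])
       @ eloop @ concat (map (\<lambda>k. rep 2 (cyc Ln k)) [2..<n+1]) @ eloop"
  by (simp add: Path_def)

lemma Path_other: "(i = 0 \<or> i > n + 1) \<Longrightarrow> Path n Ln i = []"
  by (auto simp add: Path_def)

lemma cyclen_0: "cyclen n 0 = 0"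
  by (cases n) (auto simp add: cyclen_Suc P_def Path_def)

lemma cyclen_big: "i > n \<Longrightarrow> cyclen n i = 0"
  by (cases n) (auto simp add: cyclen_Suc P_def Path_def)

lemma len_cyc_pos: "Ln i \<ge> 1 \<Longrightarrow> length (cyc Ln i) = Ln i"
  by (simp add: len_cyc)

lemma sum_ge_one_term: "1 \<le> k \<Longrightarrow> k \<le> n \<Longrightarrow> (f::nat\<Rightarrow>nat) k \<le> (\<Sum>j=1..n. f j)"
  by (rule member_le_sum) auto

lemma cyclen_ge: "1 \<le> k \<Longrightarrow> k \<le> n \<Longrightarrow> n + 1 \<le> cyclen n k"
proof (induction n arbitrary: k)
  case 0 then show ?case by simp
next
  case (Suc n)
  show ?case
  proof (cases "n = 0")
    case True
    with Suc.prems have "k = 1" by simp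
    with True show ?thesis by (simp add: cyclen_Suc P_def Path_def rep_def)
  next
    case False
    hence n1: "n \<ge> 1" by simp
    have IH1: "n + 1 \<le> cyclen n 1" using Suc.IH[of 1] n1 by simp
    have S1: "cyclen n 1 \<le> (\<Sum>j=1..n. cyclen n j)" using n1 by (intro sum_ge_one_term) auto
    consider "k = n + 1" | "2 \<le> k \<and> k \<le> n" | "k = 1" using Suc.prems by linarith
    then show ?thesis
    proof cases
      case 1
      have "cyclen (Suc n) k = (n+2)^2 * (\<Sum>j=1..n. cyclen n j)"
        using 1 Path_top[OF n1, of "cyclen n"] by (simp add: cyclen_Suc P_def)
      moreover have "(\<Sum>j=1..n. cyclen n j) \<ge> 1" using IH1 S1 by linarith
      moreover have "(n+2)^2 \<ge> Suc n + 1" by (simp add: power2_eq_square)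
      ultimately show ?thesis
        by (metis le_trans mult_le_mono mult_1_right)
    next
      case 2
      have IHk: "n + 1 \<le> cyclen n k" using Suc.IH[of k] 2 by simp
      have up: "[k..<n+1] = k # [Suc k..<n+1]" using 2 by (simp add: upt_conv_Cons)
      have "cyclen (Suc n) k = length (eloop @ concat (map (\<lambda>j. rep 2 (cyc (cyclen n) j)) [k..<n+1]) @ eloop)"
        using 2 n1 by (simp add: cyclen_Suc P_def Path_mid)
      also have "\<dots> \<ge> 2 * cyclen n k"
        using up IHk by (simp add: len_cyc_pos)
      finally show ?thesis using IHk by linarith
    next
      case 3
      define K where "K = 2 * (1 + (\<Sum>j=1..n. cyclen n j))"
      have K1: "K \<ge> 1" by (simp add: K_def)
      have up: "[1..<K+1] = 1 # [Suc 1..<K+1]" using K1 upt_conv_Cons[of 1 "K+1"] by simp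
      have eqP: "P n 1 = concat (map (\<lambda>a. rep a eloop @ rep 2 (cyc (cyclen n) 1)) [1..<K+1])
       @ eloop @ concat (map (\<lambda>k. rep 2 (cyc (cyclen n) k)) [2..<n+1]) @ eloop"
        unfolding P_def K_def by (rule Path_one[OF n1])
      have "cyclen (Suc n) k = length (P n 1)" using 3 by (simp add: cyclen_Suc)
      also have "\<dots> \<ge> length (rep 2 (cyc (cyclen n) 1))"
        unfolding eqP up by simp
      also have "length (rep 2 (cyc (cyclen n) 1)) = 2 * cyclen n 1"
        using IH1 by (simp add: len_cyc_pos)
      finally show ?thesis using IH1 3 by linarith
    qed
  qed
qed

lemma cyclen_pos: "1 \<le> k \<Longrightarrow> k \<le> n \<Longrightarrow> 2 \<le> cyclen n k"
  using cyclen_ge[of k n] by linarith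

definition cw :: "nat \<Rightarrow> vert list \<Rightarrow> bool" where
  "cw n l \<longleftrightarrow> (\<forall>j < length l. (l!j, (l @ [centre]) ! Suc j) \<in> E n) \<and> (l \<noteq> [] \<longrightarrow> hd l = centre)"

lemma cw_Nil[simp]: "cw n []" by (simp add: cw_def)

lemma loop_E: "(centre, centre) \<in> E n" by (simp add: E_def)

lemma cw_eloop: "cw n eloop" by (simp add: cw_def loop_E)
lemma cw_single: "cw n [centre]" by (simp add: cw_def loop_E)

lemma cw_append: assumes a: "cw n a" and b: "cw n b" shows "cw n (a @ b)"
proof -
  have hb: "(b @ [centre]) ! 0 = centre" using b by (cases b) (auto simp add: cw_def)
  have "((a@b)!j, ((a@b) @ [centre]) ! Suc j) \<in> E n" if j: "j < length (a@b)" for j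
  proof (cases "j < length a")
    case True
    show ?thesis
    proof (cases "Suc j < length a")
      case True2: True
      have "(a!j, (a @ [centre]) ! Suc j) \<in> E n" using a True by (simp add: cw_def)
      thus ?thesis using True True2 by (simp add: nth_append)
    next
      case False
      hence sj: "Suc j = length a" using True by simp
      have "(a!j, (a @ [centre]) ! Suc j) \<in> E n" using a True by (simp add: cw_def)
      moreover have "(a @ [centre]) ! Suc j = centre" using sj by (simp add: nth_append)
      moreover have "((a@b) @ [centre]) ! Suc j = (b @ [centre]) ! 0" using sj by (simp add: nth_append)
      ultimately show ?thesis using True hb by (simp add: nth_append)
    qed
  next
    case False
    then obtain i where i: "j = length a + i" by (metis le_Suc_ex not_less)
    have "i < length b" using j i by simp
    hence "(b!i, (b @ [centre]) ! Suc i) \<in> E n" using b by (simp add: cw_def)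
    thus ?thesis using i by (simp add: nth_append)
  qed
  moreover have "a @ b \<noteq> [] \<longrightarrow> hd (a @ b) = centre"
    using a b by (cases a) (auto simp add: cw_def)
  ultimately show ?thesis by (simp add: cw_def)
qed

lemma cw_concat: "(\<And>l. l \<in> set ls \<Longrightarrow> cw n l) \<Longrightarrow> cw n (concat ls)"
  by (induction ls) (auto intro: cw_append)

lemma cw_rep: "cw n c \<Longrightarrow> cw n (rep a c)"
  unfolding rep_def by (rule cw_concat) auto

lemma cv_edge: "1 \<le> k \<Longrightarrow> k \<le> n \<Longrightarrow> j < cyclen n k \<Longrightarrow> (cv n k j, cv n k (Suc j)) \<in> E n"
  unfolding E_def by blast

lemma cyc_nth: "j < length (cyc (cyclen n) k) \<Longrightarrow> cyclen n k \<ge> 1 \<Longrightarrow> cyc (cyclen n) k ! j = cv n k j"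
  by (cases j) (auto simp add: cyc_def cv_def centre_def nth_Cons' len_cyc)

lemma cw_cyc: assumes k: "1 \<le> k" "k \<le> n" shows "cw n (cyc (cyclen n) k)"
proof -
  have L: "cyclen n k \<ge> 2" using cyclen_pos k by simp
  have len: "length (cyc (cyclen n) k) = cyclen n k" using L by (simp add: len_cyc)
  have "(cyc (cyclen n) k ! j, (cyc (cyclen n) k @ [centre]) ! Suc j) \<in> E n" if j: "j < cyclen n k" for j
  proof -
    have a: "cyc (cyclen n) k ! j = cv n k j" using j len L by (simp add: cyc_nth)
    have b: "(cyc (cyclen n) k @ [centre]) ! Suc j = cv n k (Suc j)"
    proof (cases "Suc j < cyclen n k")
      case True thus ?thesis using len L by (simp add: nth_append cyc_nth)
    next
      case False hence "Suc j = cyclen n k" using j by simp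
      thus ?thesis using len by (simp add: nth_append cv_def)
    qed
    show ?thesis unfolding a b using cv_edge k j by simp
  qed
  moreover have "hd (cyc (cyclen n) k) = centre" by (simp add: cyc_def)
  ultimately show ?thesis using len by (simp add: cw_def)
qed

lemma cw_P: "cw n (P n i)"
proof (cases "n = 0")
  case True thus ?thesis by (simp add: P_def Path_n0 cw_rep cw_single)
next
  case False
  hence n1: "n \<ge> 1" by simp
  have cyc_ok: "\<And>k. 1 \<le> k \<Longrightarrow> k \<le> n \<Longrightarrow> cw n (rep 2 (cyc (cyclen n) k))"
    by (intro cw_rep cw_cyc) auto
  consider "i = 0 \<or> i > n + 1" | "i = n + 1" | "2 \<le> i \<and> i \<le> n" | "i = 1" by linarith
  then show ?thesis
  proof cases
    case 1 thus ?thesis by (simp add: P_def Path_other)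
  next
    case 2 thus ?thesis using Path_top[OF n1] by (simp add: P_def cw_rep cw_single)
  next
    case 3
    have "cw n (concat (map (\<lambda>k. rep 2 (cyc (cyclen n) k)) [i..<n+1]))"
      by (rule cw_concat) (use 3 cyc_ok in auto)
    moreover have "P n i = eloop @ concat (map (\<lambda>k. rep 2 (cyc (cyclen n) k)) [i..<n+1]) @ eloop"
      unfolding P_def using 3 by (intro Path_mid[OF n1]) auto
    ultimately show ?thesis by (metis cw_append cw_eloop)
  next
    case 4
    have A: "cw n (concat (map (\<lambda>a. rep a eloop @ rep 2 (cyc (cyclen n) 1)) [1..<2 * (1 + (\<Sum>k=1..n. cyclen n k)) + 1]))"
      by (rule cw_concat) (use cyc_ok n1 cw_cyc[of 1 n] in \<open>auto intro!: cw_append cw_rep cw_single\<close>)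
    have B: "cw n (concat (map (\<lambda>k. rep 2 (cyc (cyclen n) k)) [2..<n+1]))"
      by (rule cw_concat) (use cyc_ok in auto)
    have "P n i = concat (map (\<lambda>a. rep a eloop @ rep 2 (cyc (cyclen n) 1)) [1..<2 * (1 + (\<Sum>k=1..n. cyclen n k)) + 1])
       @ eloop @ concat (map (\<lambda>k. rep 2 (cyc (cyclen n) k)) [2..<n+1]) @ eloop"
      unfolding P_def 4 by (rule Path_one[OF n1])
    thus ?thesis using A B by (metis cw_append cw_eloop)
  qed
qed

lemma set_P: assumes "v \<in> set (P n i)"
  shows "v = centre \<or> (1 \<le> fst v \<and> fst v \<le> n \<and> 1 \<le> snd v \<and> snd v < cyclen n (fst v) \<and> (2 \<le> i \<longrightarrow> i \<le> fst v))"
proof (cases "n = 0")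
  case True thus ?thesis using assms by (auto simp add: P_def Path_n0 set_rep split: if_splits)
next
  case False
  hence n1: "n \<ge> 1" by simp
  consider "i = 0 \<or> i > n + 1" | "i = n + 1" | "2 \<le> i \<and> i \<le> n" | "i = 1" by linarith
  then show ?thesis
  proof cases
    case 1 thus ?thesis using assms by (simp add: P_def Path_other)
  next
    case 2 thus ?thesis using assms Path_top[OF n1] by (auto simp add: P_def set_rep split: if_splits)
  next
    case 3
    have "P n i = eloop @ concat (map (\<lambda>k. rep 2 (cyc (cyclen n) k)) [i..<n+1]) @ eloop"
      unfolding P_def using 3 by (intro Path_mid[OF n1]) auto
    thus ?thesis using assms 3 by (auto simp add: set_rep set_cyc)
  next
    case 4
    have "P n i = concat (map (\<lambda>a. rep a eloop @ rep 2 (cyc (cyclen n) 1)) [1..<2 * (1 + (\<Sum>k=1..n. cyclen n k)) + 1])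
       @ eloop @ concat (map (\<lambda>k. rep 2 (cyc (cyclen n) k)) [2..<n+1]) @ eloop"
      unfolding P_def 4 by (rule Path_one[OF n1])
    thus ?thesis using assms 4 n1 by (auto simp add: set_rep set_cyc split: if_splits)
  qed
qed

lemma last_P: assumes "P n i \<noteq> []" shows "last (P n i) = centre"
proof (cases "n = 0")
  case True thus ?thesis using assms
    by (auto simp add: P_def Path_n0 rep_def numeral_eq_Suc split: if_splits)
next
  case False
  hence n1: "n \<ge> 1" by simp
  consider "i = 0 \<or> i > n + 1" | "i = n + 1" | "2 \<le> i \<and> i \<le> n" | "i = 1" by linarith
  then show ?thesis
  proof cases
    case 1 thus ?thesis using assms by (simp add: P_def Path_other)
  next
    case 2
    hence eq: "P n i = rep ((n+2)^2 * (\<Sum>k=1..n. cyclen n k)) eloop"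
      using Path_top[OF n1] by (simp add: P_def)
    have "\<forall>a. rep a eloop \<noteq> [] \<longrightarrow> last (rep a eloop) = centre"
    proof
      fix a show "rep a eloop \<noteq> [] \<longrightarrow> last (rep a eloop) = centre"
        by (induction a) (auto simp add: rep_Suc)
    qed
    thus ?thesis using assms eq by simp
  next
    case 3
    have "P n i = eloop @ concat (map (\<lambda>k. rep 2 (cyc (cyclen n) k)) [i..<n+1]) @ eloop"
      unfolding P_def using 3 by (intro Path_mid[OF n1]) auto
    thus ?thesis by simp
  next
    case 4
    have "P n i = concat (map (\<lambda>a. rep a eloop @ rep 2 (cyc (cyclen n) 1)) [1..<2 * (1 + (\<Sum>k=1..n. cyclen n k)) + 1])
       @ eloop @ concat (map (\<lambda>k. rep 2 (cyc (cyclen n) k)) [2..<n+1]) @ eloop"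
      unfolding P_def 4 by (rule Path_one[OF n1])
    thus ?thesis by simp
  qed
qed

lemma hd_P: "P n i \<noteq> [] \<Longrightarrow> P n i ! 0 = centre"
  using cw_P[of n i] by (simp add: cw_def hd_conv_nth)

lemma E_cases: "(u,v) \<in> E n \<Longrightarrow> (u = centre \<and> v = centre) \<or>
   (\<exists>i j. 1 \<le> i \<and> i \<le> n \<and> j < cyclen n i \<and> u = cv n i j \<and> v = cv n i (Suc j))"
  by (auto simp add: E_def)

lemma cv_eq_pair: "cv n i j = (p, q) \<Longrightarrow> 1 \<le> i \<Longrightarrow> 1 \<le> q \<Longrightarrow> i = p \<and> j = q \<and> 0 < j \<and> j < cyclen n i"
  by (auto simp add: cv_def centre_def split: if_splits)

lemma E1: "(u,v) \<in> E n \<Longrightarrow> u = (p,j) \<Longrightarrow> 1 \<le> j \<Longrightarrow> Suc j < cyclen n p \<Longrightarrow> v = (p, Suc j)"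
  by (drule E_cases) (auto simp add: centre_def cv_def split: if_splits)

lemma E2: "(u,v) \<in> E n \<Longrightarrow> u = (p,j) \<Longrightarrow> 1 \<le> j \<Longrightarrow> Suc j = cyclen n p \<Longrightarrow> v = centre"
  by (drule E_cases) (auto simp add: centre_def cv_def split: if_splits)

lemma E4: "(u,v) \<in> E n \<Longrightarrow> v = (p,j) \<Longrightarrow> 1 \<le> j \<Longrightarrow> u = (if j = 1 then centre else (p, j - 1))"
  by (drule E_cases) (auto simp add: centre_def cv_def split: if_splits)

lemma V_iff: "v \<in> V n \<longleftrightarrow> v = centre \<or> (1 \<le> fst v \<and> fst v \<le> n \<and> 1 \<le> snd v \<and> snd v < cyclen n (fst v))"
  by (cases v) (auto simp add: V_def)

lemma P_in_V: "v \<in> set (P n i) \<Longrightarrow> v \<in> V n"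
  using set_P[of v n i] by (auto simp add: V_iff)

lemma phi_centre[simp]: "phi n centre = centre" by (simp add: phi_def)

lemma phi_pair: "1 \<le> k \<Longrightarrow> phi n (k, j) = P n k ! j"
  by (simp add: phi_def centre_def)

lemma phi_V: assumes "v \<in> V (Suc n)" shows "phi n v \<in> V n"
proof (cases "v = centre")
  case True thus ?thesis by (simp add: V_def)
next
  case False
  hence "1 \<le> fst v" "snd v < length (P n (fst v))" using assms by (auto simp add: V_iff cyclen_Suc)
  hence "P n (fst v) ! snd v \<in> set (P n (fst v))" by simp
  thus ?thesis using False by (simp add: phi_def P_in_V)
qed

lemma phi_cv: assumes "1 \<le> k" "j \<le> cyclen (Suc n) k"
  shows "phi n (cv (Suc n) k j) = (P n k @ [centre]) ! j"
proof -
  have len: "length (P n k) = cyclen (Suc n) k" by (simp add: cyclen_Suc)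
  show ?thesis
  proof (cases "j = 0")
    case True
    show ?thesis using True hd_P[of n k] by (cases "P n k = []") (auto simp add: cv_def nth_append)
  next
    case False
    show ?thesis
    proof (cases "j < cyclen (Suc n) k")
      case True
      thus ?thesis using False assms len by (simp add: cv_def phi_pair nth_append)
    next
      case False2: False
      hence "j = cyclen (Suc n) k" using assms by simp
      thus ?thesis using len by (simp add: cv_def nth_append)
    qed
  qed
qed

lemma phi_E: assumes "(u,v) \<in> E (Suc n)" shows "(phi n u, phi n v) \<in> E n"
  using E_cases[OF assms]
proof
  assume "u = centre \<and> v = centre" thus ?thesis by (simp add: loop_E)
next
  assume "\<exists>i j. 1 \<le> i \<and> i \<le> Suc n \<and> j < cyclen (Suc n) i \<and> u = cv (Suc n) i j \<and> v = cv (Suc n) i (Suc j)"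
  then obtain k j where k: "1 \<le> k" "k \<le> Suc n" "j < cyclen (Suc n) k" "u = cv (Suc n) k j" "v = cv (Suc n) k (Suc j)"
    by blast
  have "phi n u = (P n k @ [centre]) ! j" using k phi_cv by simp
  moreover have "phi n v = (P n k @ [centre]) ! Suc j" using k phi_cv by simp
  moreover have "j < length (P n k)" using k by (simp add: cyclen_Suc)
  ultimately show ?thesis using cw_P[of n k] by (simp add: cw_def nth_append)
qed

lemma vert_ne_centre: "1 \<le> j \<Longrightarrow> (k, j) \<noteq> centre" by (simp add: centre_def)

lemma contig: assumes q: "q < length (P n i)" and pq: "P n i ! q = (k, j)" and j: "1 \<le> j"
  shows "j + s < cyclen n k \<Longrightarrow> q + s < length (P n i) \<and> P n i ! (q + s) = (k, j + s)"
proof (induction s)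
  case 0 thus ?case using q pq by simp
next
  case (Suc s)
  hence IH: "q + s < length (P n i)" "P n i ! (q + s) = (k, j + s)" by auto
  have e: "(P n i ! (q+s), (P n i @ [centre]) ! Suc (q+s)) \<in> E n" using cw_P[of n i] IH(1) unfolding cw_def by blast
  have nx: "(P n i @ [centre]) ! Suc (q+s) = (k, Suc (j + s))"
    using E1[OF e IH(2)] j Suc.prems by simp
  have "Suc (q + s) \<noteq> length (P n i)"
  proof
    assume "Suc (q + s) = length (P n i)"
    hence "(P n i @ [centre]) ! Suc (q+s) = centre" by (simp add: nth_append)
    thus False using nx by (simp add: centre_def)
  qed
  hence lt: "Suc (q + s) < length (P n i)" using IH(1) by simp
  thus ?case using nx by (simp add: nth_append)
qed

lemma contig_end: assumes q: "q < length (P n i)" and pq: "P n i ! q = (k, j)" and j: "1 \<le> j"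
  and jl: "j < cyclen n k"
  shows "q + (cyclen n k - j) < length (P n i) \<and> P n i ! (q + (cyclen n k - j)) = centre"
proof -
  define s where "s = cyclen n k - j - 1"
  have c: "q + s < length (P n i) \<and> P n i ! (q + s) = (k, j + s)"
    using contig[OF q pq j, of s] jl by (simp add: s_def)
  have e: "(P n i ! (q+s), (P n i @ [centre]) ! Suc (q+s)) \<in> E n" using cw_P[of n i] c unfolding cw_def by blast
  have nx: "(P n i @ [centre]) ! Suc (q+s) = centre"
    using E2[OF e] c j jl by (simp add: s_def)
  have "Suc (q + s) \<noteq> length (P n i)"
  proof
    assume a: "Suc (q + s) = length (P n i)"
    have ne: "P n i \<noteq> []" using c by auto
    have "last (P n i) = P n i ! (length (P n i) - 1)" by (rule last_conv_nth[OF ne])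
    moreover have "length (P n i) - 1 = q + s" using a by simp
    ultimately have "last (P n i) = (k, j + s)" using c by simp
    moreover have "last (P n i) = centre" using last_P[OF ne] .
    ultimately show False using j by (simp add: centre_def)
  qed
  hence lt: "Suc (q + s) < length (P n i)" using c by simp
  have eq: "Suc (q + s) = q + (cyclen n k - j)" using jl by (simp add: s_def)
  have "P n i ! Suc (q+s) = centre" using nx lt by (simp add: nth_append)
  thus ?thesis using lt unfolding eq by simp
qed

fun Phi :: "nat \<Rightarrow> nat \<Rightarrow> vert \<Rightarrow> vert" where
  "Phi 0 m v = v"
| "Phi (Suc k) m v = Phi k m (phi (m + k) v)"

lemma Phi_Suc': "Phi (Suc k) m v = phi m (Phi k (Suc m) v)"
proof (induction k arbitrary: v)
  case 0 thus ?case by simp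
next
  case (Suc k)
  have "Phi (Suc (Suc k)) m v = Phi (Suc k) m (phi (m + Suc k) v)" by simp
  also have "\<dots> = phi m (Phi k (Suc m) (phi (m + Suc k) v))" by (rule Suc.IH)
  also have "Phi k (Suc m) (phi (m + Suc k) v) = Phi (Suc k) (Suc m) v" by simp
  finally show ?case .
qed

lemma Phi_centre[simp]: "Phi k m centre = centre"
  by (induction k) auto

lemma Phi_V: "v \<in> V (m + k) \<Longrightarrow> Phi k m v \<in> V m"
proof (induction k arbitrary: v)
  case 0 thus ?case by simp
next
  case (Suc k)
  have "phi (m + k) v \<in> V (m + k)" using phi_V[of v "m+k"] Suc.prems by simp
  thus ?case using Suc.IH by simp
qed

lemma Phi_X: "z \<in> X \<Longrightarrow> Phi k m (z (m + k)) = z m"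
proof (induction k arbitrary: m)
  case 0 thus ?case by simp
next
  case (Suc k)
  have "Phi (Suc k) m (z (m + Suc k)) = phi m (Phi k (Suc m) (z (Suc m + k)))"
    using Phi_Suc'[of k m "z (m + Suc k)"] by simp
  also have "Phi k (Suc m) (z (Suc m + k)) = z (Suc m)" using Suc by blast
  also have "phi m (z (Suc m)) = z m" using Suc.prems by (simp add: X_def)
  finally show ?case .
qed

lemma Phi_X': "z \<in> X \<Longrightarrow> m \<le> l \<Longrightarrow> Phi (l - m) m (z l) = z m"
  using Phi_X[of z "l - m" m] by simp

lemma Phi_dark: "v \<in> V (m + k) \<Longrightarrow> 1 \<le> m \<Longrightarrow> v = centre \<or> fst v > m \<Longrightarrow> Phi k m v = centre"
proof (induction k arbitrary: v)
  case 0 thus ?case by (auto simp add: V_iff)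
next
  case (Suc k)
  show ?case
  proof (cases "v = centre")
    case True thus ?thesis by simp
  next
    case False
    hence fv: "fst v > m" "1 \<le> fst v" "snd v < cyclen (Suc (m + k)) (fst v)" using Suc.prems by (auto simp add: V_iff)
    have w: "phi (m + k) v = P (m + k) (fst v) ! snd v" using False by (simp add: phi_def)
    have mem: "P (m + k) (fst v) ! snd v \<in> set (P (m + k) (fst v))" using fv(3) by (simp add: cyclen_Suc)
    have "phi (m + k) v \<in> V (m + k)" using w mem P_in_V by simp
    moreover have "phi (m + k) v = centre \<or> fst (phi (m + k) v) > m"
      using set_P[OF mem] fv(1) Suc.prems(2) w by auto
    ultimately show ?thesis using Suc.IH Suc.prems(2) by simp
  qed
qed

lemma Phi_dark': "v \<in> V l \<Longrightarrow> m \<le> l \<Longrightarrow> 1 \<le> m \<Longrightarrow> v = centre \<or> fst v > m \<Longrightarrow> Phi (l - m) m v = centre"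
  using Phi_dark[of v m "l - m"] by simp

lemma P_head: assumes "1 \<le> p" "p \<le> n" shows "\<exists>rest. P n p = centre # cyc (cyclen n) p @ rest"
proof (cases "p = 1")
  case True
  have n1: "n \<ge> 1" using assms by simp
  define K where "K = 2 * (1 + (\<Sum>j=1..n. cyclen n j))"
  have K1: "K \<ge> 1" by (simp add: K_def)
  have up: "[1..<K+1] = 1 # [Suc 1..<K+1]" using K1 upt_conv_Cons[of 1 "K+1"] by simp
  have eqP: "P n 1 = concat (map (\<lambda>a. rep a eloop @ rep 2 (cyc (cyclen n) 1)) [1..<K+1])
       @ eloop @ concat (map (\<lambda>k. rep 2 (cyc (cyclen n) k)) [2..<n+1]) @ eloop"
    unfolding P_def K_def by (rule Path_one[OF n1])
  show ?thesis unfolding True eqP up by (simp add: rep_2 rep_Suc)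
next
  case False
  have n1: "n \<ge> 1" using assms by simp
  have up: "[p..<n+1] = p # [Suc p..<n+1]" using assms upt_conv_Cons[of p "n+1"] by simp
  have "P n p = eloop @ concat (map (\<lambda>k. rep 2 (cyc (cyclen n) k)) [p..<n+1]) @ eloop"
    unfolding P_def using assms False by (intro Path_mid[OF n1]) auto
  thus ?thesis unfolding up by (simp add: rep_2)
qed

lemma P_nth_head: assumes "1 \<le> p" "p \<le> n" "1 \<le> s" "s \<le> cyclen n p"
  shows "P n p ! s = (if s = 1 then centre else (p, s - 1))"
proof -
  obtain rest where r: "P n p = centre # cyc (cyclen n) p @ rest" using P_head assms by blast
  have L: "cyclen n p \<ge> 2" using cyclen_pos assms by simp
  have len: "length (cyc (cyclen n) p) = cyclen n p" using L by (simp add: len_cyc)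
  have s1: "s - 1 < length (cyc (cyclen n) p)" using assms len by linarith
  have "P n p ! s = (cyc (cyclen n) p @ rest) ! (s - 1)" using r assms by (simp add: nth_Cons')
  also have "\<dots> = cyc (cyclen n) p ! (s - 1)" using s1 by (simp add: nth_append)
  also have "\<dots> = cv n p (s - 1)" using assms len L by (simp add: cyc_nth)
  finally show ?thesis using assms s1 len by (auto simp add: cv_def)
qed

lemma Phi_cyc: assumes "1 \<le> p" "p \<le> m" "1 \<le> s" "s \<le> k + 1"
  shows "Phi k m (p, s) = (if s = k + 1 then (p, 1) else centre)"
  using assms
proof (induction k arbitrary: s)
  case 0 thus ?case by simp
next
  case (Suc k)
  have L: "cyclen (m + k) p \<ge> m + k + 1" using cyclen_ge Suc.prems by simp
  have "Phi (Suc k) m (p, s) = Phi k m (phi (m + k) (p, s))" by simp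
  also have "phi (m + k) (p, s) = P (m + k) p ! s" using Suc.prems by (simp add: phi_pair)
  also have "\<dots> = (if s = 1 then centre else (p, s - 1))"
    using Suc.prems L by (intro P_nth_head) auto
  finally show ?case using Suc.IH[of "s - 1"] Suc.prems by auto
qed

definition rem :: "nat \<Rightarrow> vert \<Rightarrow> nat" where
  "rem n v = cyclen n (fst v) - snd v"

definition good :: "(nat \<Rightarrow> vert) \<Rightarrow> bool" where
  "good x \<longleftrightarrow> x \<in> X \<and> (\<forall>K. \<exists>N. \<forall>n \<ge> N. x n \<noteq> centre \<and> K < rem n (x n))"

lemma X_V: "x \<in> X \<Longrightarrow> x n \<in> V n" by (simp add: X_def)
lemma X_phi: "x \<in> X \<Longrightarrow> phi n (x (Suc n)) = x n" by (simp add: X_def)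

lemma T_good:
  assumes g: "good x"
  shows "T x \<in> X \<and> (\<forall>n. (x n, T x n) \<in> E n) \<and>
     (\<forall>n. x n \<noteq> centre \<longrightarrow> 1 < rem n (x n) \<longrightarrow> T x n = (fst (x n), Suc (snd (x n)))) \<and> good (T x)"
proof -
  have xX: "x \<in> X" using g by (simp add: good_def)
  obtain N where N: "\<And>n. n \<ge> N \<Longrightarrow> x n \<noteq> centre \<and> 1 < rem n (x n)" using g unfolding good_def by blast
  define adv where "adv v = (fst v, Suc (snd v))" for v :: vert
  define y where "y n = (if N \<le> n then adv (x n) else Phi (N - n) n (adv (x N)))" for n
  have xinfo: "1 \<le> fst (x n) \<and> fst (x n) \<le> n \<and> 1 \<le> snd (x n) \<and> Suc (snd (x n)) < cyclen n (fst (x n))"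
    if "n \<ge> N" for n
  proof -
    have "x n \<in> V n" using xX by (simp add: X_def)
    thus ?thesis using N[OF that] by (auto simp add: V_iff rem_def)
  qed
  have yV_hi: "y n \<in> V n" if "n \<ge> N" for n
    using xinfo[OF that] that by (auto simp add: y_def adv_def V_iff)
  have yV: "y n \<in> V n" for n
  proof (cases "N \<le> n")
    case True thus ?thesis using yV_hi by simp
  next
    case False
    have "adv (x N) \<in> V (n + (N - n))" using yV_hi[of N] False by (simp add: y_def)
    hence "Phi (N - n) n (adv (x N)) \<in> V n" by (rule Phi_V)
    thus ?thesis using False by (simp add: y_def)
  qed
  have yphi: "phi n (y (Suc n)) = y n" for n
  proof (cases "N \<le> n")
    case True
    obtain p q where pq: "x (Suc n) = (p, q)" by (cases "x (Suc n)")
    have xs: "1 \<le> p" "q < cyclen (Suc n) p" using xinfo[of "Suc n"] True pq by auto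
    obtain i j where ij: "x n = (i, j)" by (cases "x n")
    have xn: "1 \<le> j" "Suc j < cyclen n i" using xinfo[OF True] ij by auto
    have "P n p ! q = (i, j)" using X_phi[OF xX, of n] pq ij xs by (simp add: phi_pair)
    hence "P n p ! (q + 1) = (i, j + 1)"
      using contig[of q n p i j 1] xs xn by (simp add: cyclen_Suc)
    thus ?thesis using True pq ij xs by (simp add: y_def adv_def phi_pair)
  next
    case False
    show ?thesis
    proof (cases "Suc n = N")
      case True
      hence "N - n = Suc 0" by simp
      thus ?thesis using False True by (simp add: y_def)
    next
      case False2: False
      hence eq: "N - n = Suc (N - Suc n)" using False by simp
      have "y n = phi n (Phi (N - Suc n) (Suc n) (adv (x N)))"
        using False by (simp add: y_def eq Phi_Suc' del: Phi.simps(2))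
      moreover have "y (Suc n) = Phi (N - Suc n) (Suc n) (adv (x N))" using False False2 by (simp add: y_def)
      ultimately show ?thesis by simp
    qed
  qed
  have yX: "y \<in> X" using yV yphi by (simp add: X_def)
  have edge_hi: "(x n, y n) \<in> E n" if "n \<ge> N" for n
  proof -
    obtain i j where ij: "x n = (i, j)" by (cases "x n")
    have xn: "1 \<le> i" "i \<le> n" "1 \<le> j" "Suc j < cyclen n i" using xinfo[OF that] ij by auto
    have "x n = cv n i j" using xn ij by (simp add: cv_def)
    moreover have "y n = cv n i (Suc j)" using xn ij that by (simp add: cv_def y_def adv_def)
    ultimately show ?thesis using cv_edge[of i n j] xn by simp
  qed
  have edge: "(x n, y n) \<in> E n" for n
  proof (induction "N - n" arbitrary: n)
    case 0 thus ?case using edge_hi by simp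
  next
    case (Suc d)
    hence "d = N - Suc n" by simp
    hence "(x (Suc n), y (Suc n)) \<in> E (Suc n)" using Suc.hyps(1) by simp
    hence "(phi n (x (Suc n)), phi n (y (Suc n))) \<in> E n" by (rule phi_E)
    thus ?case using yphi X_phi[OF xX] by simp
  qed
  have uniq: "y' = y" if y': "y' \<in> X \<and> (\<forall>n. (x n, y' n) \<in> E n)" for y'
  proof
    fix n
    have hi: "y' m = y m" if "m \<ge> N" for m
    proof -
      obtain i j where ij: "x m = (i, j)" by (cases "x m")
      have xn: "1 \<le> j" "Suc j < cyclen m i" using xinfo[OF that] ij by auto
      have "(x m, y' m) \<in> E m" using y' by blast
      hence "y' m = (i, Suc j)" using E1[of "x m" "y' m" m i j] ij xn by simp
      thus ?thesis using that ij by (simp add: y_def adv_def)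
    qed
    show "y' n = y n"
    proof (cases "N \<le> n")
      case True thus ?thesis using hi by simp
    next
      case False
      have "Phi (N - n) n (y' N) = y' n" using Phi_X'[of y' n N] y' False by simp
      moreover have "Phi (N - n) n (y N) = y n" using Phi_X'[of y n N] yX False by simp
      ultimately show ?thesis using hi[of N] by simp
    qed
  qed
  have Tx: "T x = y"
    unfolding T_def
    by (rule the_equality) (use yX edge uniq in auto)
  have gy: "good y"
    unfolding good_def
  proof (intro conjI allI)
    show "y \<in> X" by (rule yX)
    fix K
    obtain N' where N': "\<And>n. n \<ge> N' \<Longrightarrow> x n \<noteq> centre \<and> Suc K < rem n (x n)"
      using g unfolding good_def by blast
    have "\<forall>n\<ge>max N N'. y n \<noteq> centre \<and> K < rem n (y n)"
    proof (intro allI impI)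
      fix n assume "n \<ge> max N N'"
      hence "n \<ge> N" "n \<ge> N'" by auto
      thus "y n \<noteq> centre \<and> K < rem n (y n)"
        using N'[of n] by (auto simp add: y_def adv_def rem_def centre_def)
    qed
    thus "\<exists>N. \<forall>n\<ge>N. y n \<noteq> centre \<and> K < rem n (y n)" by blast
  qed
  have step: "T x n = (fst (x n), Suc (snd (x n)))" if "x n \<noteq> centre" "1 < rem n (x n)" for n
  proof -
    have "(x n, y n) \<in> E n" by (rule edge)
    obtain i j where ij: "x n = (i, j)" by (cases "x n")
    have "x n \<in> V n" using xX by (simp add: X_def)
    hence "1 \<le> j" using that ij by (auto simp add: V_iff)
    moreover have "Suc j < cyclen n i" using that ij by (simp add: rem_def)
    ultimately have "y n = (i, Suc j)" using E1[OF edge[of n] ij] by simp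
    thus ?thesis using Tx ij by simp
  qed
  show ?thesis using Tx yX edge gy step by simp
qed

lemma orbit:
  assumes g: "good x"
  shows "good ((T^^t) x) \<and> (\<forall>n. x n \<noteq> centre \<longrightarrow> t < rem n (x n) \<longrightarrow> (T^^t) x n = (fst (x n), snd (x n) + t))"
proof (induction t)
  case 0 thus ?case using g by simp
next
  case (Suc t)
  have gt: "good ((T^^t) x)" using Suc by simp
  note TG = T_good[OF gt]
  have "good ((T^^Suc t) x)" using TG by simp
  moreover have "(T^^Suc t) x n = (fst (x n), snd (x n) + Suc t)"
    if "x n \<noteq> centre" "Suc t < rem n (x n)" for n
  proof -
    have a: "(T^^t) x n = (fst (x n), snd (x n) + t)" using Suc that by simp
    have "(T^^t) x n \<noteq> centre" using a that(1) g
      by (auto simp add: good_def X_def V_iff centre_def)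
    moreover have "1 < rem n ((T^^t) x n)" using a that by (simp add: rem_def)
    ultimately have "T ((T^^t) x) n = (fst ((T^^t) x n), Suc (snd ((T^^t) x n)))" using TG by blast
    thus ?thesis using a by simp
  qed
  ultimately show ?case by blast
qed

lemma orbit_good: "good x \<Longrightarrow> good ((T^^t) x)" using orbit by blast
lemma orbit_X: "good x \<Longrightarrow> (T^^t) x \<in> X" using orbit_good good_def by blast
lemma orbit_pos: "good x \<Longrightarrow> x n \<noteq> centre \<Longrightarrow> t < rem n (x n) \<Longrightarrow> (T^^t) x n = (fst (x n), snd (x n) + t)"
  using orbit by blast
lemma orbit_edge: "good x \<Longrightarrow> ((T^^t) x n, (T^^Suc t) x n) \<in> E n"
  using T_good[OF orbit_good[of x t]] by simp

lemma deg_attained: "\<exists>n. deg x = degv (x n)"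
proof -
  have "range (\<lambda>n. degv (x n)) \<noteq> {}" by simp
  hence "Inf (range (\<lambda>n. degv (x n))) \<in> range (\<lambda>n. degv (x n))"
    unfolding Inf_enat_def using LeastI[of "\<lambda>z. z \<in> range (\<lambda>n. degv (x n))" "degv (x 0)"] by simp
  thus ?thesis unfolding deg_def by auto
qed

lemma deg_lower: "deg x \<le> degv (x n)"
  unfolding deg_def by (rule INF_lower) simp

lemma fst_mono: assumes xX: "x \<in> X" and ne: "x n \<noteq> centre"
  shows "x (Suc n) \<noteq> centre \<and> fst (x n) \<ge> fst (x (Suc n))"
proof -
  have ne2: "x (Suc n) \<noteq> centre" using ne X_phi[OF xX, of n] by auto
  obtain p q where pq: "x (Suc n) = (p, q)" by (cases "x (Suc n)")
  have V: "1 \<le> p" "q < cyclen (Suc n) p" using X_V[OF xX, of "Suc n"] ne2 pq by (auto simp add: V_iff)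
  have "x n = P n p ! q" using X_phi[OF xX, of n] pq V by (simp add: phi_pair)
  moreover have "P n p ! q \<in> set (P n p)" using V by (simp add: cyclen_Suc)
  ultimately have "x n = centre \<or> (1 \<le> fst (x n) \<and> (2 \<le> p \<longrightarrow> p \<le> fst (x n)))"
    using set_P[of "x n" n p] by auto
  hence "p \<le> fst (x n)" using ne V by (cases "p \<ge> 2") auto
  thus ?thesis using ne2 pq by simp
qed

lemma deg_info:
  assumes xX: "x \<in> X" and dx: "deg x = enat i" and i: "0 < i"
  shows "\<exists>N. \<forall>n \<ge> N. x n \<noteq> centre \<and> fst (x n) = i"
proof -
  obtain n0 where n0: "deg x = degv (x n0)" using deg_attained by blast
  have ne0: "x n0 \<noteq> centre" using n0 dx by (auto simp add: degv_def)
  have f0: "fst (x n0) = i" using n0 dx ne0 by (simp add: degv_def)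
  have up: "x n \<noteq> centre \<and> fst (x n) \<le> i" if "n \<ge> n0" for n
    using that
  proof (induction n rule: dec_induct)
    case base thus ?case using ne0 f0 by simp
  next
    case (step n) thus ?case using fst_mono[OF xX, of n] by auto
  qed
  have lo: "i \<le> fst (x n)" if "x n \<noteq> centre" for n
    using deg_lower[of x n] dx that by (simp add: degv_def)
  show ?thesis using up lo by (intro exI[of _ n0]) (auto intro: antisym)
qed

lemma rem_grow:
  assumes xX: "x \<in> X" and ne: "x n \<noteq> centre" and same: "fst (x (Suc n)) = fst (x n)"
  shows "rem n (x n) < rem (Suc n) (x (Suc n))"
proof -
  obtain i a where ia: "x n = (i, a)" by (cases "x n")
  have ne2: "x (Suc n) \<noteq> centre" using fst_mono[OF xX ne] by simp
  obtain b where b: "x (Suc n) = (i, b)" using same ia by (cases "x (Suc n)") auto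
  have Va: "1 \<le> i" "1 \<le> a" "a < cyclen n i" using X_V[OF xX, of n] ne ia by (auto simp add: V_iff)
  have Vb: "b < cyclen (Suc n) i" using X_V[OF xX, of "Suc n"] ne2 b by (auto simp add: V_iff)
  have "P n i ! b = (i, a)" using X_phi[OF xX, of n] b ia Va by (simp add: phi_pair)
  hence "b + (cyclen n i - a) < length (P n i)"
    using contig_end[of b n i i a] Vb Va by (simp add: cyclen_Suc)
  thus ?thesis using ia b by (simp add: rem_def cyclen_Suc)
qed

lemma deg_good:
  assumes xX: "x \<in> X" and dx: "deg x = enat i" and i: "0 < i"
  shows "good x"
proof -
  obtain N where N: "\<And>n. n \<ge> N \<Longrightarrow> x n \<noteq> centre \<and> fst (x n) = i" using deg_info[OF assms] by blast
  have gr: "n - N \<le> rem n (x n)" if "n \<ge> N" for n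
    using that
  proof (induction n rule: dec_induct)
    case base thus ?case by simp
  next
    case (step n)
    have "rem n (x n) < rem (Suc n) (x (Suc n))"
      using rem_grow[OF xX] N[of n] N[of "Suc n"] step.hyps by simp
    thus ?case using step.IH step.hyps by simp
  qed
  show ?thesis unfolding good_def
  proof (intro conjI allI)
    show "x \<in> X" by (rule xX)
    fix K
    have "\<forall>n \<ge> N + Suc K. x n \<noteq> centre \<and> K < rem n (x n)"
    proof (intro allI impI)
      fix n assume "N + Suc K \<le> n"
      thus "x n \<noteq> centre \<and> K < rem n (x n)" using N[of n] gr[of n] by simp
    qed
    thus "\<exists>N. \<forall>n\<ge>N. x n \<noteq> centre \<and> K < rem n (x n)" by blast
  qed
qed

lemma walk_fwd: assumes g: "good x" and a: "(T^^t) x l = (p, j)" and j: "1 \<le> j"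
  shows "j + s < cyclen l p \<Longrightarrow> (T^^(t+s)) x l = (p, j+s)"
proof (induction s)
  case 0 thus ?case using a by simp
next
  case (Suc s)
  hence IH: "(T^^(t+s)) x l = (p, j+s)" by simp
  have "((T^^(t+s)) x l, (T^^Suc (t+s)) x l) \<in> E l" by (rule orbit_edge[OF g])
  hence "(T^^Suc (t+s)) x l = (p, Suc (j+s))" using E1[OF _ IH] j Suc.prems by simp
  thus ?case by simp
qed

lemma walk_bwd: assumes g: "good x" and a: "(T^^u) x l = (p, j)"
  shows "s < j \<Longrightarrow> s \<le> u \<Longrightarrow> (T^^(u - s)) x l = (p, j - s)"
proof (induction s)
  case 0 thus ?case using a by simp
next
  case (Suc s)
  hence IH: "(T^^(u-s)) x l = (p, j - s)" by simp
  have us: "u - s = Suc (u - Suc s)" using Suc.prems by simp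
  have "((T^^(u - Suc s)) x l, (T^^Suc (u - Suc s)) x l) \<in> E l" by (rule orbit_edge[OF g])
  hence "((T^^(u - Suc s)) x l, (p, j - s)) \<in> E l" using IH us by simp
  hence "(T^^(u - Suc s)) x l = (if j - s = 1 then centre else (p, j - s - 1))"
    using E4 Suc.prems by simp
  moreover have "j - s \<noteq> 1" using Suc.prems by simp
  ultimately have "(T^^(u - Suc s)) x l = (p, j - s - 1)" by simp
  moreover have "j - s - 1 = j - Suc s" by simp
  ultimately show ?case by simp
qed

lemma walk_bwd_centre: assumes g: "good x" and a: "(T^^u) x l = (p, j)" and j: "1 \<le> j" "j \<le> u"
  shows "(T^^(u - j)) x l = centre"
proof -
  have b: "(T^^(u - (j - 1))) x l = (p, 1)" using walk_bwd[OF g a, of "j - 1"] j by simp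
  have us: "u - (j - 1) = Suc (u - j)" using j by simp
  have b': "(T^^Suc (u - j)) x l = (p, 1)" using b unfolding us .
  have "((T^^(u - j)) x l, (T^^Suc (u - j)) x l) \<in> E l" by (rule orbit_edge[OF g])
  hence "((T^^(u - j)) x l, (p, 1)) \<in> E l" unfolding b' .
  from E4[OF this refl] show ?thesis by simp
qed

lemma orbit_V: "good x \<Longrightarrow> (T^^t) x l \<in> V l"
  using orbit_X X_V by blast

lemma orbit_proj: "good x \<Longrightarrow> m \<le> l \<Longrightarrow> (T^^t) x m = Phi (l - m) m ((T^^t) x l)"
  using Phi_X'[OF orbit_X] by simp

definition dark :: "vert \<Rightarrow> bool" where
  "dark v \<longleftrightarrow> v = centre \<or> 2 < fst v"

lemma prop_step:
  assumes gx: "good x" and gy: "good y" and l: "2 \<le> l"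
    and ag2: "\<And>t'. T0 \<le> t' \<Longrightarrow> (T^^t') x 2 = (T^^t') y 2" and t: "T0 \<le> t"
    and Q: "(T^^t) x l = (T^^t) y l \<or> (dark ((T^^t) x l) \<and> dark ((T^^t) y l))"
    and nd: "\<not> dark ((T^^Suc t) x l)"
  shows "(T^^Suc t) y l = (T^^Suc t) x l"
proof -
  obtain p j where pj: "(T^^Suc t) x l = (p, j)" by (cases "(T^^Suc t) x l")
  have V: "1 \<le> p" "p \<le> 2" "1 \<le> j" "j < cyclen l p"
    using orbit_V[OF gx, of "Suc t" l] nd pj by (auto simp add: V_iff dark_def)
  have ex: "((T^^t) x l, (T^^Suc t) x l) \<in> E l" by (rule orbit_edge[OF gx])
  have prev: "(T^^t) x l = (if j = 1 then centre else (p, j - 1))" using E4[OF ex pj V(3)] .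
  show ?thesis
  proof (cases "j = 1")
    case False
    hence px: "(T^^t) x l = (p, j - 1)" using prev by simp
    hence "\<not> dark ((T^^t) x l)" using V by (simp add: dark_def centre_def)
    hence py: "(T^^t) y l = (p, j - 1)" using Q px by auto
    have ey: "((T^^t) y l, (T^^Suc t) y l) \<in> E l" by (rule orbit_edge[OF gy])
    have "(T^^Suc t) y l = (p, Suc (j - 1))" using E1[OF ey py] False V by simp
    thus ?thesis using pj False V by simp
  next
    case True
    hence cx: "(T^^t) x l = centre" using prev by simp
    hence dy: "dark ((T^^t) y l)" using Q by (auto simp add: dark_def)
    define h where "h = l - 1"
    have h1: "1 \<le> h" "h = (l - 2) + 1" using l by (auto simp add: h_def)
    have Lp: "cyclen l p \<ge> l + 1" using cyclen_ge V l by simp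
    have xw: "(T^^(Suc t + (s - 1))) x l = (p, s)" if "1 \<le> s" "s \<le> h" for s
      using walk_fwd[OF gx pj V(3), of "s - 1"] True that Lp by (simp add: h_def)
    have x2: "(T^^(t + s)) x 2 = (if s = h then (p, 1) else centre)" if "1 \<le> s" "s \<le> h" for s
    proof -
      have "(T^^(t + s)) x l = (p, s)" using xw[OF that] that by simp
      hence "(T^^(t + s)) x 2 = Phi (l - 2) 2 (p, s)" using orbit_proj[OF gx, of 2 l] l by simp
      also have "\<dots> = (if s = l - 2 + 1 then (p, 1) else centre)"
        using V that h1 by (intro Phi_cyc) auto
      finally show ?thesis using h1 by simp
    qed
    have y2: "(T^^(t + h)) y 2 = (p, 1)" using x2[of h] ag2[of "t + h"] h1 t by simp
    obtain p' s0 where ps: "(T^^(t + h)) y l = (p', s0)" by (cases "(T^^(t + h)) y l")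
    have yproj: "Phi (l - 2) 2 (p', s0) = (p, 1)"
      using orbit_proj[OF gy, of 2 l "t + h"] l ps y2 by simp
    have Vy: "(p', s0) \<in> V l" using orbit_V[OF gy] ps by metis
    have ndy: "\<not> dark (p', s0)"
    proof
      assume "dark (p', s0)"
      hence "Phi (l - 2) 2 (p', s0) = centre" using Vy l by (intro Phi_dark') (auto simp add: dark_def)
      thus False using yproj by (simp add: centre_def)
    qed
    have Vy': "1 \<le> p'" "p' \<le> 2" "1 \<le> s0" "s0 < cyclen l p'" using Vy ndy
      by (auto simp add: V_iff dark_def centre_def)
    have s0h: "s0 \<le> h"
    proof (rule ccontr)
      assume "\<not> s0 \<le> h"
      hence "(T^^(t + h - h)) y l = (p', s0 - h)" using walk_bwd[OF gy ps, of h] by simp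
      hence "(T^^t) y l = (p', s0 - h)" by simp
      moreover have "s0 - h \<ge> 1" using \<open>\<not> s0 \<le> h\<close> by simp
      ultimately show False using dy Vy' by (simp add: dark_def centre_def)
    qed
    have s0eq: "s0 = h"
    proof (rule ccontr)
      assume "s0 \<noteq> h"
      hence "s0 < l - 2 + 1" using s0h h1 by simp
      hence "Phi (l - 2) 2 (p', s0) = centre" using Vy' by (subst Phi_cyc) auto
      thus False using yproj by (simp add: centre_def)
    qed
    have "Phi (l - 2) 2 (p', s0) = (p', 1)" using s0eq h1 Vy' by (subst Phi_cyc) auto
    hence pp: "p' = p" using yproj by simp
    have "(T^^(t + h - (h - 1))) y l = (p', s0 - (h - 1))" using walk_bwd[OF gy ps, of "h - 1"] s0eq h1 by simp
    moreover have "t + h - (h - 1) = Suc t" using h1 by simp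
    ultimately have "(T^^Suc t) y l = (p, 1)" using s0eq pp h1 by simp
    thus ?thesis using pj True by simp
  qed
qed

lemma propagate:
  assumes gx: "good x" and gy: "good y" and l: "2 \<le> l"
    and ag2: "\<And>t'. T0 \<le> t' \<Longrightarrow> (T^^t') x 2 = (T^^t') y 2"
    and eqT: "(T^^T0) x l = (T^^T0) y l"
  shows "T0 \<le> t \<Longrightarrow> (T^^t) x l = (T^^t) y l \<or> (dark ((T^^t) x l) \<and> dark ((T^^t) y l))"
proof (induction t rule: dec_induct)
  case base thus ?case using eqT by simp
next
  case (step t)
  have ag2': "\<And>t'. T0 \<le> t' \<Longrightarrow> (T^^t') y 2 = (T^^t') x 2" using ag2 by metis
  have Q': "(T^^t) y l = (T^^t) x l \<or> (dark ((T^^t) y l) \<and> dark ((T^^t) x l))" using step.IH by auto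
  show ?case
  proof (cases "dark ((T^^Suc t) x l)")
    case True
    show ?thesis
    proof (cases "dark ((T^^Suc t) y l)")
      case True2: True thus ?thesis using True by simp
    next
      case False
      have "(T^^Suc t) x l = (T^^Suc t) y l"
        using prop_step[OF gy gx l ag2' step.hyps(1) Q' False] .
      thus ?thesis by simp
    qed
  next
    case False
    have "(T^^Suc t) y l = (T^^Suc t) x l"
      using prop_step[OF gx gy l ag2 step.hyps(1) step.IH False] .
    thus ?thesis by simp
  qed
qed

definition Kn :: "nat \<Rightarrow> nat" where "Kn n = 2 * (1 + (\<Sum>k=1..n. cyclen n k))"
definition pre :: "nat \<Rightarrow> vert list" where
  "pre n = concat (map (\<lambda>a. rep a eloop @ rep 2 (cyc (cyclen n) 1)) [1..<Kn n + 1])"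
definition post :: "nat \<Rightarrow> vert list" where
  "post n = concat (map (\<lambda>k. rep 2 (cyc (cyclen n) k)) [2..<n+1])"
definition post3 :: "nat \<Rightarrow> vert list" where
  "post3 n = concat (map (\<lambda>k. rep 2 (cyc (cyclen n) k)) [3..<n+1])"
definition Z :: "nat \<Rightarrow> nat" where "Z n = length (pre n)"

lemma P1_split: "n \<ge> 1 \<Longrightarrow> P n 1 = pre n @ [centre] @ post n @ [centre]"
  unfolding P_def pre_def post_def Kn_def using Path_one[of n "cyclen n"] by simp

lemma post_split: "n \<ge> 2 \<Longrightarrow> post n = cyc (cyclen n) 2 @ cyc (cyclen n) 2 @ post3 n"
proof -
  assume n: "n \<ge> 2"
  have "[2..<n+1] = 2 # [Suc 2..<n+1]" using n upt_conv_Cons[of 2 "n+1"] by simp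
  thus ?thesis unfolding post_def post3_def by (simp add: rep_2 numeral_3_eq_3)
qed

lemma pre_last: assumes "n \<ge> 1" shows "\<exists>preL. pre n = preL @ cyc (cyclen n) 1"
proof -
  have K: "Kn n \<ge> 1" by (simp add: Kn_def)
  have "[1..<Kn n + 1] = [1..<Kn n] @ [Kn n]" using K by (simp add: upt_Suc_append)
  thus ?thesis unfolding pre_def by (simp add: rep_2)
qed

lemma set_pre: "v \<in> set (pre n) \<Longrightarrow> v = centre \<or> fst v = 1"
  unfolding pre_def by (auto simp add: set_rep set_cyc split: if_splits)

lemma set_post: "v \<in> set (post n) \<Longrightarrow> v = centre \<or> 2 \<le> fst v"
  unfolding post_def by (auto simp add: set_rep set_cyc split: if_splits)

lemma set_post3: "v \<in> set (post3 n) \<Longrightarrow> v = centre \<or> 3 \<le> fst v"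
  unfolding post3_def by (auto simp add: set_rep set_cyc split: if_splits)

lemma len_post3: assumes "n \<ge> 3" shows "2 * cyclen n n \<le> length (post3 n)"
proof -
  have "[3..<n+1] = [3..<n] @ [n]" using assms by (simp add: upt_Suc_append)
  hence "post3 n = concat (map (\<lambda>k. rep 2 (cyc (cyclen n) k)) [3..<n]) @ rep 2 (cyc (cyclen n) n)"
    unfolding post3_def by simp
  moreover have "length (cyc (cyclen n) n) = cyclen n n"
    using cyclen_pos[of n n] assms by (simp add: len_cyc)
  ultimately show ?thesis by simp
qed

lemma P1_nth_lo: assumes n: "n \<ge> 1" and i: "idx < Z n" shows "P n 1 ! idx = centre \<or> fst (P n 1 ! idx) = 1"
  unfolding P1_split[OF n] using i set_pre[of "pre n ! idx" n] by (simp add: Z_def nth_append)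

lemma P1_nth_Z: assumes n: "n \<ge> 1" shows "P n 1 ! Z n = centre"
  unfolding P1_split[OF n] by (simp add: Z_def nth_append)

lemma P1_nth_post: assumes n: "n \<ge> 2" and s: "s < cyclen n 2"
  shows "P n 1 ! (Z n + 1 + s) = cv n 2 s"
proof -
  have L: "cyclen n 2 \<ge> 2" using cyclen_pos[of 2 n] n by simp
  have len: "length (cyc (cyclen n) 2) = cyclen n 2" using L by (simp add: len_cyc)
  have n1: "n \<ge> 1" using n by simp
  have "P n 1 ! (Z n + 1 + s) = (post n @ [centre]) ! s" unfolding P1_split[OF n1] by (simp add: Z_def nth_append)
  also have "\<dots> = cyc (cyclen n) 2 ! s" using post_split[OF n] s len by (simp add: nth_append)
  also have "\<dots> = cv n 2 s" using s len L by (simp add: cyc_nth)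
  finally show ?thesis .
qed

lemma P1_nth_hi: assumes n: "n \<ge> 2" and idx: "Z n + 1 + 2 * cyclen n 2 \<le> idx" "idx < length (P n 1)"
  shows "P n 1 ! idx = centre \<or> 3 \<le> fst (P n 1 ! idx)"
proof -
  have L: "cyclen n 2 \<ge> 2" using cyclen_pos[of 2 n] n by simp
  have len: "length (cyc (cyclen n) 2) = cyclen n 2" using L by (simp add: len_cyc)
  define r where "r = idx - (Z n + 1 + 2 * cyclen n 2)"
  have ir: "idx = Z n + 1 + 2 * cyclen n 2 + r" using idx by (simp add: r_def)
  define A where "A = pre n @ [centre] @ cyc (cyclen n) 2 @ cyc (cyclen n) 2"
  have eP: "P n 1 = A @ (post3 n @ [centre])"
    using P1_split[of n] post_split[OF n] n by (simp add: A_def)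
  have lA: "length A = Z n + 1 + 2 * cyclen n 2"
    using len by (simp add: Z_def A_def)
  have "P n 1 ! idx = (A @ (post3 n @ [centre])) ! (length A + r)" unfolding eP lA ir ..
  hence "P n 1 ! idx = (post3 n @ [centre]) ! r" by (simp only: nth_append_length_plus)
  moreover have "r < length (post3 n @ [centre])"
    using idx ir eP lA by simp
  ultimately have "P n 1 ! idx \<in> set (post3 n @ [centre])" by (metis nth_mem)
  thus ?thesis using set_post3[of "P n 1 ! idx" n] by auto
qed

lemma P1_len: assumes n: "n \<ge> 2" shows "length (P n 1) = Z n + 1 + 2 * cyclen n 2 + length (post3 n) + 1"
proof -
  have L: "cyclen n 2 \<ge> 2" using cyclen_pos[of 2 n] n by simp
  have len: "length (cyc (cyclen n) 2) = cyclen n 2" using L by (simp add: len_cyc)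
  show ?thesis using P1_split[of n] post_split[OF n] n len by (simp add: Z_def)
qed

lemma P1_fst1_lo: "n \<ge> 1 \<Longrightarrow> idx < length (P n 1) \<Longrightarrow> P n 1 ! idx \<noteq> centre \<Longrightarrow> fst (P n 1 ! idx) = 1 \<Longrightarrow> idx < Z n"
proof (rule ccontr)
  assume n: "n \<ge> 1" and i: "idx < length (P n 1)" and ne: "P n 1 ! idx \<noteq> centre"
    and f: "fst (P n 1 ! idx) = 1" and c: "\<not> idx < Z n"
  define r where "r = idx - Z n"
  have "P n 1 ! idx = ([centre] @ post n @ [centre]) ! r" using c unfolding P1_split[OF n] by (simp add: r_def Z_def nth_append)
  moreover have "r < length ([centre] @ post n @ [centre])" using i c unfolding P1_split[OF n] by (simp add: r_def Z_def)
  ultimately have "P n 1 ! idx \<in> set ([centre] @ post n @ [centre])" by (metis nth_mem)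
  thus False using set_post[of "P n 1 ! idx" n] ne f by auto
qed

lemma P1_below: "n \<ge> 2 \<Longrightarrow> idx < Z n + 2 \<Longrightarrow> P n 1 ! idx = centre \<or> fst (P n 1 ! idx) = 1"
proof -
  assume n: "n \<ge> 2" and i: "idx < Z n + 2"
  consider "idx < Z n" | "idx = Z n" | "idx = Z n + 1 + 0" using i by linarith
  thus ?thesis
  proof cases
    case 1 thus ?thesis using P1_nth_lo n by simp
  next
    case 2 thus ?thesis using P1_nth_Z n by simp
  next
    case 3 thus ?thesis using P1_nth_post[OF n, of 0] cyclen_pos[of 2 n] n by (simp add: cv_def)
  qed
qed

lemma P1_marker: "n \<ge> 2 \<Longrightarrow> P n 1 ! (Z n + 2) = (2, 1)"
  using P1_nth_post[of n 1] cyclen_pos[of 2 n] by (simp add: cv_def)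

lemma P1_Z2_lt: "n \<ge> 2 \<Longrightarrow> Z n + 2 < length (P n 1)"
  using P1_len[of n] cyclen_pos[of 2 n] by simp

lemma orbit_proj1: "good x \<Longrightarrow> (T^^t) x M = phi M ((T^^t) x (Suc M))"
  using orbit_proj[of x M "Suc M" t] by simp

lemma above1:
  assumes g: "good x" and M: "M \<ge> 1" and ne: "(T^^T0) x M \<noteq> centre" and f: "fst ((T^^T0) x M) = 1"
  shows "\<exists>q. (T^^T0) x (Suc M) = (1, q) \<and> 1 \<le> q \<and> q < Z M \<and> P M 1 ! q = (T^^T0) x M"
proof -
  obtain i1 q where u: "(T^^T0) x (Suc M) = (i1, q)" by (cases "(T^^T0) x (Suc M)")
  have pu: "phi M (i1, q) = (T^^T0) x M" using orbit_proj1[OF g, of T0 M] u by simp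
  have une: "(i1, q) \<noteq> centre" using pu ne by auto
  have V: "1 \<le> i1" "1 \<le> q" "q < length (P M i1)"
    using orbit_V[OF g, of T0 "Suc M"] u une by (auto simp add: V_iff cyclen_Suc)
  have pv: "P M i1 ! q = (T^^T0) x M" using pu V by (simp add: phi_pair)
  have mem: "P M i1 ! q \<in> set (P M i1)" using V by simp
  have "i1 = 1"
  proof (rule ccontr)
    assume "i1 \<noteq> 1"
    hence "2 \<le> i1" using V by simp
    hence "i1 \<le> fst (P M i1 ! q)" using set_P[OF mem] pv ne by auto
    thus False using pv f \<open>2 \<le> i1\<close> by simp
  qed
  moreover have "q < Z M" using P1_fst1_lo[OF M, of q] V pv ne f \<open>i1 = 1\<close> by simp
  ultimately show ?thesis using u V pv by auto
qed

lemma lift_aux: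
  assumes gx: "good x" and gy: "good y" and M: "2 \<le> M"
    and Q: "\<And>t. T0 \<le> t \<Longrightarrow> (T^^t) x M = (T^^t) y M \<or> (dark ((T^^t) x M) \<and> dark ((T^^t) y M))"
    and qx: "(T^^T0) x (Suc M) = (1, qx)" "1 \<le> qx" "qx < Z M"
    and qy: "(T^^T0) y (Suc M) = (1, qy)" "1 \<le> qy" "qy < Z M"
    and lt: "qx < qy"
  shows False
proof -
  define s where "s = Z M + 2 - qy"
  have lenP: "Z M + 2 < cyclen (Suc M) 1" using P1_Z2_lt[OF M] by (simp add: cyclen_Suc)
  have ys: "(T^^(T0 + s)) y (Suc M) = (1, Z M + 2)"
    using walk_fwd[OF gy qy(1) qy(2), of s] lenP qy by (simp add: s_def)
  have xs: "(T^^(T0 + s)) x (Suc M) = (1, qx + s)"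
    using walk_fwd[OF gx qx(1) qx(2), of s] lenP qx lt by (simp add: s_def)
  have yM: "(T^^(T0 + s)) y M = (2, 1)"
    using orbit_proj1[OF gy, of "T0 + s" M] ys P1_marker[OF M] by (simp add: phi_pair)
  have xM: "(T^^(T0 + s)) x M = P M 1 ! (qx + s)"
    using orbit_proj1[OF gx, of "T0 + s" M] xs by (simp add: phi_pair)
  have "qx + s < Z M + 2" using lt qy by (simp add: s_def)
  hence xc: "(T^^(T0 + s)) x M = centre \<or> fst ((T^^(T0 + s)) x M) = 1" using P1_below[OF M] xM by simp
  have "\<not> dark ((T^^(T0 + s)) y M)" using yM by (simp add: dark_def centre_def)
  hence "(T^^(T0 + s)) x M = (T^^(T0 + s)) y M" using Q[of "T0 + s"] by auto
  thus False using xc yM by (auto simp add: centre_def)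
qed

lemma lift:
  assumes gx: "good x" and gy: "good y" and M: "2 \<le> M"
    and Q: "\<And>t. T0 \<le> t \<Longrightarrow> (T^^t) x M = (T^^t) y M \<or> (dark ((T^^t) x M) \<and> dark ((T^^t) y M))"
    and eq: "(T^^T0) x M = (T^^T0) y M" and ne: "(T^^T0) x M \<noteq> centre" and f: "fst ((T^^T0) x M) = 1"
  shows "(T^^T0) x (Suc M) = (T^^T0) y (Suc M) \<and> (T^^T0) x (Suc M) \<noteq> centre \<and> fst ((T^^T0) x (Suc M)) = 1"
proof -
  have M1: "M \<ge> 1" using M by simp
  obtain qx where qx: "(T^^T0) x (Suc M) = (1, qx)" "1 \<le> qx" "qx < Z M"
    using above1[OF gx M1 ne f] by blast
  obtain qy where qy: "(T^^T0) y (Suc M) = (1, qy)" "1 \<le> qy" "qy < Z M"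
    using above1[OF gy M1] ne f eq by fastforce
  have Q': "\<And>t. T0 \<le> t \<Longrightarrow> (T^^t) y M = (T^^t) x M \<or> (dark ((T^^t) y M) \<and> dark ((T^^t) x M))"
    using Q by metis
  have "qx = qy"
  proof (rule ccontr)
    assume "qx \<noteq> qy"
    hence "qx < qy \<or> qy < qx" by linarith
    thus False
    proof
      assume "qx < qy" thus False using lift_aux[OF gx gy M Q qx qy] by simp
    next
      assume "qy < qx" thus False using lift_aux[OF gy gx M Q' qy qx] by simp
    qed
  qed
  thus ?thesis using qx qy by (simp add: centre_def)
qed

lemma alpha_all_levels:
  assumes gx: "good x" and gy: "good y"
    and ag2: "\<And>t'. T0 \<le> t' \<Longrightarrow> (T^^t') x 2 = (T^^t') y 2"
    and ne: "(T^^T0) x 2 \<noteq> centre" and f: "fst ((T^^T0) x 2) = 1"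
  shows "M \<ge> 2 \<Longrightarrow> (T^^T0) x M = (T^^T0) y M \<and> (T^^T0) x M \<noteq> centre \<and> fst ((T^^T0) x M) = 1"
proof (induction M rule: dec_induct)
  case base thus ?case using ag2[of T0] ne f by simp
next
  case (step M)
  have Q: "\<And>t. T0 \<le> t \<Longrightarrow> (T^^t) x M = (T^^t) y M \<or> (dark ((T^^t) x M) \<and> dark ((T^^t) y M))"
    using propagate[OF gx gy step.hyps(1) ag2] step.IH by blast
  show ?case using lift[OF gx gy step.hyps(1) Q] step.IH by blast
qed

lemma tail_generic:
  fixes f g :: "nat \<Rightarrow> vert"
  assumes agree: "\<And>t. t0 \<le> t \<Longrightarrow> g t = f t"
    and shift: "\<And>t. t + D < \<rho> \<Longrightarrow> g t = f (t + D)"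
    and drk: "\<And>t. \<rho> - R \<le> t \<Longrightarrow> t < \<rho> \<Longrightarrow> f t = centre"
    and DR: "D \<le> R" "0 < D"
    and mk: "t0 \<le> \<tau>" "\<tau> + R < \<rho>" "f \<tau> \<noteq> centre"
  shows False
proof -
  have all: "t0 \<le> t \<Longrightarrow> t < \<rho> \<Longrightarrow> f t = centre" for t
  proof (induction "\<rho> - t" arbitrary: t rule: less_induct)
    case less
    show ?case
    proof (cases "\<rho> - R \<le> t")
      case True thus ?thesis using drk less.prems by simp
    next
      case False
      hence tD: "t + D < \<rho>" using DR by linarith
      have "f t = g t" using agree less.prems by simp
      also have "\<dots> = f (t + D)" using shift tD by simp
      also have "\<dots> = centre" using less.hyps[of "t + D"] less.prems tD DR by simp
      finally show ?thesis .
    qed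
  qed
  show False using all[of \<tau>] mk by simp
qed

lemma Phi_Suc_pair: "m \<le> n \<Longrightarrow> 1 \<le> i \<Longrightarrow> Phi (Suc n - m) m (i, idx) = Phi (n - m) m (P n i ! idx)"
proof -
  assume a: "m \<le> n" "1 \<le> i"
  have "Suc n - m = Suc (n - m)" using a by simp
  hence "Phi (Suc n - m) m (i, idx) = Phi (n - m) m (phi (m + (n - m)) (i, idx))" by simp
  also have "m + (n - m) = n" using a by simp
  finally show ?thesis using a by (simp add: phi_pair)
qed

lemma tail_apply:
  assumes gw: "good w" and gz: "good z"
    and wM: "w M = (i, aw)" and zM: "z M = (i, az)" and i: "1 \<le> i"
    and awz: "aw < az" and aw1: "1 \<le> aw" and azL: "az < cyclen M i"
    and mM: "m \<le> M"
    and agree: "\<And>t. t0 \<le> t \<Longrightarrow> (T^^t) z m = (T^^t) w m"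
    and DR: "az - aw \<le> R" and RL: "R \<le> cyclen M i"
    and drk: "\<And>idx. cyclen M i - R \<le> idx \<Longrightarrow> idx < cyclen M i \<Longrightarrow> Phi (M - m) m (i, idx) = centre"
    and mk: "aw + t0 \<le> e" "e < cyclen M i - R" "Phi (M - m) m (i, e) \<noteq> centre"
  shows False
proof -
  define f where "f t = (T^^t) w m" for t
  define g where "g t = (T^^t) z m" for t
  define \<rho> where "\<rho> = cyclen M i - aw"
  have wne: "w M \<noteq> centre" using wM aw1 by (simp add: centre_def)
  have zne: "z M \<noteq> centre" using zM awz by (simp add: centre_def)
  have wpos: "t < \<rho> \<Longrightarrow> (T^^t) w M = (i, aw + t)" for t
    using orbit_pos[OF gw wne, of t] wM by (simp add: rem_def \<rho>_def)
  have zpos: "t + (az - aw) < \<rho> \<Longrightarrow> (T^^t) z M = (i, az + t)" for t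
    using orbit_pos[OF gz zne, of t] zM awz by (simp add: rem_def \<rho>_def)
  show False
  proof (rule tail_generic[of t0 g f "az - aw" \<rho> R "e - aw"])
    show "\<And>t. t0 \<le> t \<Longrightarrow> g t = f t" using agree by (simp add: f_def g_def)
    show "g t = f (t + (az - aw))" if "t + (az - aw) < \<rho>" for t
    proof -
      have "(T^^t) z M = (T^^(t + (az - aw))) w M" using zpos[OF that] wpos[OF that] awz by simp
      thus ?thesis unfolding f_def g_def using orbit_proj[OF gz mM, of t] orbit_proj[OF gw mM, of "t + (az - aw)"] by simp
    qed
    show "f t = centre" if "\<rho> - R \<le> t" "t < \<rho>" for t
    proof -
      have "f t = Phi (M - m) m (i, aw + t)" unfolding f_def using orbit_proj[OF gw mM, of t] wpos[OF that(2)] by simp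
      also have "\<dots> = centre" using drk that RL by (simp add: \<rho>_def)
      finally show ?thesis .
    qed
    show "az - aw \<le> R" "0 < az - aw" using DR awz by auto
    show "t0 \<le> e - aw" using mk by simp
    show "e - aw + R < \<rho>" using mk RL by (simp add: \<rho>_def)
    have "e - aw < \<rho>" using mk by (simp add: \<rho>_def)
    hence "f (e - aw) = Phi (M - m) m (i, e)" unfolding f_def using orbit_proj[OF gw mM, of "e - aw"] wpos mk by simp
    thus "f (e - aw) \<noteq> centre" using mk by simp
  qed
qed

definition restI :: "nat \<Rightarrow> nat \<Rightarrow> vert list" where
  "restI n i = concat (map (\<lambda>k. rep 2 (cyc (cyclen n) k)) [i+2..<n+1])"

lemma Pi_split: assumes i: "2 \<le> i" "i + 2 \<le> n"
  shows "P n i = [centre] @ cyc (cyclen n) i @ cyc (cyclen n) i @ cyc (cyclen n) (i+1) @ cyc (cyclen n) (i+1) @ restI n i @ [centre]"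
proof -
  have n1: "n \<ge> 1" using i by simp
  have up: "[i..<n+1] = i # (i+1) # [i+2..<n+1]"
    using i upt_conv_Cons[of i "n+1"] upt_conv_Cons[of "Suc i" "n+1"] by simp
  have "P n i = eloop @ concat (map (\<lambda>k. rep 2 (cyc (cyclen n) k)) [i..<n+1]) @ eloop"
    unfolding P_def using i by (intro Path_mid[OF n1]) auto
  thus ?thesis unfolding up restI_def by (simp add: rep_2)
qed

lemma set_restI: assumes "v \<in> set (restI n i)" shows "v = centre \<or> i + 2 \<le> fst v"
proof -
  obtain k where k: "k \<in> set [i+2..<n+1]" "v \<in> set (rep 2 (cyc (cyclen n) k))"
    using assms unfolding restI_def by auto
  hence "v \<in> set (cyc (cyclen n) k)" by (simp add: set_rep)
  thus ?thesis using k(1) by (auto simp add: set_cyc)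
qed

lemma len_restI: assumes "i + 2 \<le> n" shows "2 * cyclen n n \<le> length (restI n i)"
proof -
  have "[i+2..<n+1] = [i+2..<n] @ [n]" using assms by (simp add: upt_Suc_append)
  hence "restI n i = concat (map (\<lambda>k. rep 2 (cyc (cyclen n) k)) [i+2..<n]) @ rep 2 (cyc (cyclen n) n)"
    unfolding restI_def by simp
  moreover have "length (cyc (cyclen n) n) = cyclen n n"
    using cyclen_pos[of n n] assms by (simp add: len_cyc)
  ultimately show ?thesis by simp
qed

lemma Pi_facts:
  assumes i: "2 \<le> i" "i + 2 \<le> n"
  shows "length (P n i) = 1 + 2 * cyclen n i + 2 * cyclen n (i+1) + length (restI n i) + 1"
    and "\<And>s. s < cyclen n (i+1) \<Longrightarrow> P n i ! (1 + 2 * cyclen n i + s) = cv n (i+1) s"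
    and "\<And>q. q < length (P n i) \<Longrightarrow> 1 + 2 * cyclen n i \<le> q \<Longrightarrow> P n i ! q = centre \<or> i + 1 \<le> fst (P n i ! q)"
    and "\<And>q. q < length (P n i) \<Longrightarrow> 1 + 2 * cyclen n i + 2 * cyclen n (i+1) \<le> q \<Longrightarrow> P n i ! q = centre \<or> i + 2 \<le> fst (P n i ! q)"
proof -
  have Li: "cyclen n i \<ge> 2" "cyclen n (i+1) \<ge> 2" using cyclen_pos i by auto
  have li: "length (cyc (cyclen n) i) = cyclen n i" "length (cyc (cyclen n) (i+1)) = cyclen n (i+1)"
    using Li by (auto simp add: len_cyc)
  note sp = Pi_split[OF i]
  show "length (P n i) = 1 + 2 * cyclen n i + 2 * cyclen n (i+1) + length (restI n i) + 1"
    unfolding sp using li by simp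
  show "P n i ! (1 + 2 * cyclen n i + s) = cv n (i+1) s" if "s < cyclen n (i+1)" for s
  proof -
    define A where "A = [centre] @ cyc (cyclen n) i @ cyc (cyclen n) i"
    have lA: "length A = 1 + 2 * cyclen n i" using li by (simp add: A_def)
    have e: "P n i = A @ (cyc (cyclen n) (i+1) @ cyc (cyclen n) (i+1) @ restI n i @ [centre])"
      unfolding sp A_def by simp
    have "P n i ! (1 + 2 * cyclen n i + s) = (A @ (cyc (cyclen n) (i+1) @ cyc (cyclen n) (i+1) @ restI n i @ [centre])) ! (length A + s)"
      unfolding e lA ..
    also have "\<dots> = (cyc (cyclen n) (i+1) @ cyc (cyclen n) (i+1) @ restI n i @ [centre]) ! s"
      by (simp only: nth_append_length_plus)
    also have "\<dots> = cyc (cyclen n) (i+1) ! s" using that li by (simp add: nth_append)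
    also have "\<dots> = cv n (i+1) s" using that li Li by (simp add: cyc_nth)
    finally show ?thesis .
  qed
  show "P n i ! q = centre \<or> i + 1 \<le> fst (P n i ! q)" if "q < length (P n i)" "1 + 2 * cyclen n i \<le> q" for q
  proof -
    define A where "A = [centre] @ cyc (cyclen n) i @ cyc (cyclen n) i"
    define B where "B = cyc (cyclen n) (i+1) @ cyc (cyclen n) (i+1) @ restI n i @ [centre]"
    have lA: "length A = 1 + 2 * cyclen n i" using li by (simp add: A_def)
    have e: "P n i = A @ B" unfolding sp A_def B_def by simp
    define r where "r = q - length A"
    have qr: "q = length A + r" using that lA by (simp add: r_def)
    have "P n i ! q = B ! r" unfolding e qr by (simp only: nth_append_length_plus)
    moreover have "r < length B" using that e qr by simp
    ultimately have "P n i ! q \<in> set B" by (metis nth_mem)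
    thus ?thesis using set_restI[of "P n i ! q" n i] by (auto simp add: B_def set_cyc)
  qed
  show "P n i ! q = centre \<or> i + 2 \<le> fst (P n i ! q)" if "q < length (P n i)" "1 + 2 * cyclen n i + 2 * cyclen n (i+1) \<le> q" for q
  proof -
    define A where "A = [centre] @ cyc (cyclen n) i @ cyc (cyclen n) i @ cyc (cyclen n) (i+1) @ cyc (cyclen n) (i+1)"
    define B where "B = restI n i @ [centre]"
    have lA: "length A = 1 + 2 * cyclen n i + 2 * cyclen n (i+1)" using li by (simp add: A_def)
    have e: "P n i = A @ B" unfolding sp A_def B_def by simp
    define r where "r = q - length A"
    have qr: "q = length A + r" using that lA by (simp add: r_def)
    have "P n i ! q = B ! r" unfolding e qr by (simp only: nth_append_length_plus)
    moreover have "r < length B" using that e qr by simp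
    ultimately have "P n i ! q \<in> set B" by (metis nth_mem)
    thus ?thesis using set_restI[of "P n i ! q" n i] by (auto simp add: B_def)
  qed
qed

lemma len_P_mid_bound: assumes n1: "n \<ge> 1" and i: "2 \<le> i" "i \<le> n"
  shows "length (P n i) \<le> 2 + 2 * (\<Sum>k=1..n. cyclen n k)"
proof -
  have Lk: "length (cyc (cyclen n) k) = cyclen n k" if "k \<in> set [i..<n+1]" for k
    using that cyclen_pos[of k n] i by (simp add: len_cyc)
  have "P n i = eloop @ concat (map (\<lambda>k. rep 2 (cyc (cyclen n) k)) [i..<n+1]) @ eloop"
    unfolding P_def using i by (intro Path_mid[OF n1]) auto
  hence "length (P n i) = 2 + sum_list (map (\<lambda>k. 2 * length (cyc (cyclen n) k)) [i..<n+1])"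
    by (simp add: length_concat comp_def)
  also have "sum_list (map (\<lambda>k. 2 * length (cyc (cyclen n) k)) [i..<n+1]) = sum_list (map (\<lambda>k. 2 * cyclen n k) [i..<n+1])"
    by (rule arg_cong[where f = sum_list], rule map_cong) (use Lk in auto)
  also have "\<dots> = (\<Sum>k\<in>{i..<n+1}. 2 * cyclen n k)" by (simp add: sum_list_distinct_conv_sum_set)
  also have "\<dots> \<le> (\<Sum>k\<in>{1..n}. 2 * cyclen n k)" using i by (intro sum_mono2) auto
  also have "\<dots> = 2 * (\<Sum>k=1..n. cyclen n k)" by (simp add: sum_distrib_left)
  finally show ?thesis by simp
qed

lemma cyclen_le_top: assumes i: "2 \<le> i" "i < n" shows "cyclen n i \<le> cyclen n n"
proof -
  obtain n' where n': "n = Suc n'" using i by (cases n) auto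
  have n1: "n' \<ge> 1" using i n' by simp
  define S where "S = (\<Sum>k=1..n'. cyclen n' k)"
  have S1: "S \<ge> 1" using cyclen_pos[of 1 n'] n1 sum_ge_one_term[of 1 n' "cyclen n'"] by (simp add: S_def)
  have "cyclen n i = length (P n' i)" using n' by (simp add: cyclen_Suc)
  also have "\<dots> \<le> 2 + 2 * S" using len_P_mid_bound[OF n1] i n' by (simp add: S_def)
  also have "\<dots> \<le> (n' + 2)^2 * S"
  proof -
    have "(n' + 2)^2 \<ge> (3::nat)^2" using n1 by (intro power_mono) auto
    hence "(n' + 2)^2 \<ge> 9" by simp
    hence "(n'+2)^2 * S \<ge> 9 * S" by simp
    thus ?thesis using S1 by linarith
  qed
  also have "\<dots> = cyclen n n"
    using n' Path_top[OF n1, of "cyclen n'"] by (simp add: cyclen_Suc P_def S_def)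
  finally show ?thesis .
qed

lemma case_ge2:
  assumes gw: "good w" and gz: "good z" and i: "2 \<le> i" and n: "i + 2 \<le> n"
    and wn: "w n \<noteq> centre" "fst (w n) = i" and zn: "z n \<noteq> centre" "fst (z n) = i"
    and wS: "w (Suc n) = (i, aw)" and zS: "z (Suc n) = (i, az)" and lt: "aw < az"
    and agree: "\<And>t. t0 \<le> t \<Longrightarrow> (T^^t) z (i+1) = (T^^t) w (i+1)"
    and remw: "t0 < rem n (w n)"
  shows False
proof -
  have wX: "w \<in> X" and zX: "z \<in> X" using gw gz by (auto simp add: good_def)
  have aw1: "1 \<le> aw" using X_V[OF wX, of "Suc n"] wS i by (auto simp add: V_iff centre_def)
  have azL: "az < cyclen (Suc n) i" using X_V[OF zX, of "Suc n"] zS lt by (auto simp add: V_iff centre_def)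
  have awL: "aw < length (P n i)" using azL lt by (simp add: cyclen_Suc)
  have Li: "cyclen n i \<ge> n + 1" "cyclen n (i+1) \<ge> n + 1" using cyclen_ge i n by auto
  have pw: "P n i ! aw = w n" using X_phi[OF wX, of n] wS i by (simp add: phi_pair)
  have pz: "P n i ! az = z n" using X_phi[OF zX, of n] zS i by (simp add: phi_pair)
  have az_lo: "az < 1 + 2 * cyclen n i"
  proof (rule ccontr)
    assume "\<not> ?thesis"
    hence "P n i ! az = centre \<or> i + 1 \<le> fst (P n i ! az)"
      using Pi_facts(3)[OF i n, of az] azL by (simp add: cyclen_Suc)
    thus False using pz zn by simp
  qed
  obtain w' where w': "w n = (i, w')" using wn by (cases "w n") auto
  have w'V: "1 \<le> w'" "w' < cyclen n i" using X_V[OF wX, of n] wn w' by (auto simp add: V_iff)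
  have remdef: "rem n (w n) = cyclen n i - w'" using w' by (simp add: rem_def)
  have aw_lo: "aw + rem n (w n) \<le> 1 + 2 * cyclen n i"
  proof -
    define s where "s = cyclen n i - w' - 1"
    have c: "aw + s < length (P n i) \<and> P n i ! (aw + s) = (i, w' + s)"
      using contig[OF awL pw[unfolded w'] w'V(1), of s] w'V by (simp add: s_def)
    have "aw + s < 1 + 2 * cyclen n i"
    proof (rule ccontr)
      assume "\<not> ?thesis"
      hence "P n i ! (aw + s) = centre \<or> i + 1 \<le> fst (P n i ! (aw + s))"
        using Pi_facts(3)[OF i n, of "aw + s"] c by simp
      thus False using c i w'V by (simp add: centre_def)
    qed
    thus ?thesis using remdef w'V by (simp add: s_def)
  qed
  define R where "R = length (restI n i) + 1"
  have lenP: "cyclen (Suc n) i = 1 + 2 * cyclen n i + 2 * cyclen n (i+1) + R"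
    using Pi_facts(1)[OF i n] by (simp add: cyclen_Suc R_def)
  have top: "cyclen n i \<le> cyclen n n" using cyclen_le_top i n by simp
  have lrest: "2 * cyclen n n \<le> length (restI n i)" using len_restI n by simp
  define e where "e = 1 + 2 * cyclen n i + (n - i)"
  have im: "i + 1 \<le> Suc n" using n by simp
  show False
  proof (rule tail_apply[OF gw gz wS zS _ lt aw1 azL im agree, where R=R and e=e])
    show "1 \<le> i" using i by simp
    show "az - aw \<le> R" using az_lo aw1 top lrest by (simp add: R_def)
    show "R \<le> cyclen (Suc n) i" using lenP by simp
    show "Phi (Suc n - (i + 1)) (i + 1) (i, idx) = centre"
      if "cyclen (Suc n) i - R \<le> idx" "idx < cyclen (Suc n) i" for idx
    proof -
      have "Phi (Suc n - (i + 1)) (i + 1) (i, idx) = Phi (n - (i + 1)) (i + 1) (P n i ! idx)"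
        using n i by (intro Phi_Suc_pair) auto
      also have "\<dots> = centre"
      proof (rule Phi_dark')
        show "P n i ! idx \<in> V n" using that by (intro P_in_V[where i=i]) (simp add: cyclen_Suc)
        show "i + 1 \<le> n" "1 \<le> i + 1" using n by auto
        show "P n i ! idx = centre \<or> i + 1 < fst (P n i ! idx)"
          using Pi_facts(4)[OF i n, of idx] that lenP by (auto simp add: cyclen_Suc)
      qed
      finally show ?thesis .
    qed
    show "aw + t0 \<le> e" using aw_lo remw by (simp add: e_def)
    show "e < cyclen (Suc n) i - R" using lenP Li by (simp add: e_def)
    have "Phi (Suc n - (i + 1)) (i + 1) (i, e) = Phi (n - (i + 1)) (i + 1) (P n i ! e)"
      using n i by (intro Phi_Suc_pair) auto
    also have "P n i ! e = cv n (i+1) (n - i)" unfolding e_def using Pi_facts(2)[OF i n, of "n - i"] Li by simp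
    also have "\<dots> = (i + 1, n - i)"
    proof -
      have "n - i < cyclen n (i+1)" "n - i \<noteq> 0" using Li n by auto
      thus ?thesis by (simp add: cv_def)
    qed
    also have "Phi (n - (i + 1)) (i + 1) (i + 1, n - i) = (i + 1, 1)"
      using n by (subst Phi_cyc) auto
    finally show "Phi (Suc n - (i + 1)) (i + 1) (i, e) \<noteq> centre" by (simp add: centre_def)
  qed
qed

lemma P1_lastcopy:
  assumes n: "n \<ge> 1" and s: "s < cyclen n 1"
  shows "Z n - cyclen n 1 + s < Z n \<and> P n 1 ! (Z n - cyclen n 1 + s) = cv n 1 s"
proof -
  obtain preL where pl: "pre n = preL @ cyc (cyclen n) 1" using pre_last[OF n] by blast
  have L: "cyclen n 1 \<ge> 2" using cyclen_pos[of 1 n] n by simp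
  have lc: "length (cyc (cyclen n) 1) = cyclen n 1" using L by (simp add: len_cyc)
  have Zc: "Z n - cyclen n 1 = length preL" using pl lc by (simp add: Z_def)
  have e: "P n 1 = preL @ (cyc (cyclen n) 1 @ [centre] @ post n @ [centre])"
    using P1_split[OF n] pl by simp
  have "P n 1 ! (Z n - cyclen n 1 + s) = (preL @ (cyc (cyclen n) 1 @ [centre] @ post n @ [centre])) ! (length preL + s)"
    unfolding e Zc ..
  also have "\<dots> = (cyc (cyclen n) 1 @ [centre] @ post n @ [centre]) ! s" by (simp only: nth_append_length_plus)
  also have "\<dots> = cyc (cyclen n) 1 ! s" using s lc by (simp add: nth_append)
  also have "\<dots> = cv n 1 s" using s lc L by (simp add: cyc_nth)
  finally show ?thesis using Zc s pl lc by (simp add: Z_def)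
qed

lemma last_copy:
  assumes g: "good x" and n: "n \<ge> 2"
    and xn: "x n = (1, a)" and xS: "x (Suc n) = (1, b)"
    and avoid: "\<And>t. t0 \<le> t \<Longrightarrow> (T^^t) x 2 = centre \<or> fst ((T^^t) x 2) \<noteq> 1"
    and remx: "t0 < rem n (x n)"
  shows "b = Z n - cyclen n 1 + a"
proof -
  have xX: "x \<in> X" using g by (simp add: good_def)
  have n1: "n \<ge> 1" using n by simp
  have L: "cyclen n 1 \<ge> n + 1" using cyclen_ge[of 1 n] n by simp
  have aV: "1 \<le> a" "a < cyclen n 1" using X_V[OF xX, of n] xn by (auto simp add: V_iff centre_def)
  have bV: "1 \<le> b" "b < length (P n 1)" using X_V[OF xX, of "Suc n"] xS by (auto simp add: V_iff centre_def cyclen_Suc)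
  have pb: "P n 1 ! b = (1, a)" using X_phi[OF xX, of n] xS xn by (simp add: phi_pair)
  have bZ: "b < Z n" using P1_fst1_lo[OF n1 bV(2)] pb by (simp add: centre_def)
  define c where "c = Z n - cyclen n 1"
  have pc: "P n 1 ! c = centre" using P1_lastcopy[OF n1, of 0] L by (simp add: c_def cv_def)
  show ?thesis
  proof (cases "c \<le> b")
    case True
    define s where "s = b - c"
    have bs: "b = c + s" using True by (simp add: s_def)
    have sL: "s < cyclen n 1" using bZ bs c_def by simp
    have "P n 1 ! b = cv n 1 s" using P1_lastcopy[OF n1 sL] bs by (simp add: c_def)
    hence "s = a" using pb sL by (auto simp add: cv_def centre_def split: if_splits)
    thus ?thesis using bs by (simp add: c_def)
  next
    case False
    have far: "cyclen n 1 - a \<le> c - b"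
    proof (rule ccontr)
      assume "\<not> ?thesis"
      hence "a + (c - b) < cyclen n 1" by simp
      hence "b + (c - b) < length (P n 1) \<and> P n 1 ! (b + (c - b)) = (1, a + (c - b))"
        using contig[OF bV(2) pb aV(1)] by blast
      thus False using pc False by (simp add: centre_def)
    qed
    define e1 where "e1 = c + (n - 1)"
    have e1L: "n - 1 < cyclen n 1" using L by simp
    have pe: "P n 1 ! e1 = (1, n - 1)"
    proof -
      have "n - 1 \<noteq> 0" using n by simp
      thus ?thesis using P1_lastcopy[OF n1 e1L] e1L by (simp add: e1_def c_def cv_def)
    qed
    have e1Z: "e1 < Z n" using P1_lastcopy[OF n1 e1L] by (simp add: e1_def c_def)
    define \<tau> where "\<tau> = e1 - b"
    have tau_ge: "t0 \<le> \<tau>" using far remx xn False by (simp add: \<tau>_def e1_def rem_def)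
    have Zlen: "Z n < length (P n 1)" using P1_Z2_lt[OF n] by simp
    have xne: "x (Suc n) \<noteq> centre" using xS bV by (simp add: centre_def)
    have "(T^^\<tau>) x (Suc n) = (1, b + \<tau>)"
      using orbit_pos[OF g xne, of \<tau>] xS e1Z Zlen False by (simp add: rem_def \<tau>_def cyclen_Suc e1_def)
    hence xt: "(T^^\<tau>) x (Suc n) = (1, e1)" using False by (simp add: \<tau>_def e1_def)
    have "(T^^\<tau>) x 2 = Phi (Suc n - 2) 2 (1, e1)" using orbit_proj[OF g, of 2 "Suc n" \<tau>] xt n by simp
    also have "\<dots> = Phi (n - 2) 2 (P n 1 ! e1)" using n by (intro Phi_Suc_pair) auto
    also have "\<dots> = (1, 1)" unfolding pe using n by (subst Phi_cyc) auto
    finally have "(T^^\<tau>) x 2 = (1, 1)" .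
    thus ?thesis using avoid[OF tau_ge] by (simp add: centre_def)
  qed
qed

lemma case_beta:
  assumes gw: "good w" and gz: "good z" and n: "n \<ge> 3"
    and wn: "w n = (1, w')" and zn: "z n = (1, z')"
    and wS: "w (Suc n) = (1, Z n - cyclen n 1 + w')" and zS: "z (Suc n) = (1, Z n - cyclen n 1 + z')"
    and lt: "w' < z'" and D: "z' - w' \<le> 2 * cyclen n n"
    and agree: "\<And>t. t0 \<le> t \<Longrightarrow> (T^^t) z 2 = (T^^t) w 2"
    and remw: "t0 < rem n (w n)"
  shows False
proof -
  have wX: "w \<in> X" and zX: "z \<in> X" using gw gz by (auto simp add: good_def)
  have n1: "n \<ge> 1" and n2: "n \<ge> 2" using n by auto
  have L1: "cyclen n 1 \<ge> n + 1" "cyclen n 2 \<ge> n + 1" using cyclen_ge n by auto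
  have wV: "1 \<le> w'" "w' < cyclen n 1" using X_V[OF wX, of n] wn by (auto simp add: V_iff centre_def)
  have zV: "z' < cyclen n 1" using X_V[OF zX, of n] zn lt by (auto simp add: V_iff centre_def)
  have ZL: "cyclen n 1 \<le> Z n"
  proof -
    obtain preL where pl: "pre n = preL @ cyc (cyclen n) 1" using pre_last[OF n1] by blast
    have "length (cyc (cyclen n) 1) = cyclen n 1" using L1 by (simp add: len_cyc)
    thus ?thesis using pl by (simp add: Z_def)
  qed
  define R where "R = length (post3 n) + 1"
  have lenP: "cyclen (Suc n) 1 = Z n + 1 + 2 * cyclen n 2 + R"
    using P1_len[OF n2] by (simp add: cyclen_Suc R_def)
  have lp3: "2 * cyclen n n \<le> length (post3 n)" using len_post3 n by simp
  define e where "e = Z n + 1 + (n - 1)"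
  show False
  proof (rule tail_apply[OF gw gz wS zS _ _ _ _ _ agree, where R=R and e=e])
    show "1 \<le> (1::nat)" by simp
    show "Z n - cyclen n 1 + w' < Z n - cyclen n 1 + z'" using lt by simp
    show "1 \<le> Z n - cyclen n 1 + w'" using wV by simp
    show "Z n - cyclen n 1 + z' < cyclen (Suc n) 1" using lenP zV ZL by simp
    show "2 \<le> Suc n" using n by simp
    show "Z n - cyclen n 1 + z' - (Z n - cyclen n 1 + w') \<le> R" using D lp3 lt by (simp add: R_def)
    show "R \<le> cyclen (Suc n) 1" using lenP by simp
    show "Phi (Suc n - 2) 2 (1, idx) = centre"
      if "cyclen (Suc n) 1 - R \<le> idx" "idx < cyclen (Suc n) 1" for idx
    proof -
      have "Phi (Suc n - 2) 2 (1, idx) = Phi (n - 2) 2 (P n 1 ! idx)"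
        using n by (intro Phi_Suc_pair) auto
      also have "\<dots> = centre"
      proof (rule Phi_dark')
        show "P n 1 ! idx \<in> V n" using that by (intro P_in_V[where i=1]) (simp add: cyclen_Suc)
        show "2 \<le> n" "1 \<le> (2::nat)" using n by auto
        show "P n 1 ! idx = centre \<or> 2 < fst (P n 1 ! idx)"
          using P1_nth_hi[OF n2, of idx] that lenP by (auto simp add: cyclen_Suc)
      qed
      finally show ?thesis .
    qed
    show "Z n - cyclen n 1 + w' + t0 \<le> e" using remw wn wV ZL by (simp add: e_def rem_def)
    show "e < cyclen (Suc n) 1 - R" using lenP L1 by (simp add: e_def)
    have "Phi (Suc n - 2) 2 (1, e) = Phi (n - 2) 2 (P n 1 ! e)"
      using n by (intro Phi_Suc_pair) auto
    also have "P n 1 ! e = cv n 2 (n - 1)" unfolding e_def using P1_nth_post[OF n2, of "n - 1"] L1 by simp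
    also have "\<dots> = (2, n - 1)"
    proof -
      have "n - 1 < cyclen n 2" "n - 1 \<noteq> 0" using L1 n by auto
      thus ?thesis by (simp add: cv_def)
    qed
    also have "Phi (n - 2) 2 (2, n - 1) = (2, 1)" using n by (subst Phi_cyc) auto
    finally show "Phi (Suc n - 2) 2 (1, e) \<noteq> centre" by (simp add: centre_def)
  qed
qed



lemma conv_agree:
  assumes lim: "(\<lambda>n. dist_X ((T ^^ n) x) ((T ^^ n) y)) \<longlonglongrightarrow> 0"
  shows "\<exists>t0. \<forall>t \<ge> t0. (T^^t) x m = (T^^t) y m"
proof -
  have r: "(0::real) < (1/2)^m" by simp
  obtain no where no: "\<And>t. t \<ge> no \<Longrightarrow> norm (dist_X ((T ^^ t) x) ((T ^^ t) y) - 0) < (1/2)^m"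
    using LIMSEQ_D[OF lim r] by blast
  have "(T^^t) x m = (T^^t) y m" if t: "t \<ge> no" for t
  proof (cases "(T^^t) x = (T^^t) y")
    case True thus ?thesis by simp
  next
    case False
    define k where "k = (LEAST k. (T^^t) x k \<noteq> (T^^t) y k)"
    have "dist_X ((T ^^ t) x) ((T ^^ t) y) = (1/2)^k" using False by (simp add: dist_X_def k_def)
    hence "(1/2::real)^k < (1/2)^m" using no[OF t] by simp
    hence "m < k" by simp
    thus ?thesis using not_less_Least[of m "\<lambda>k. (T^^t) x k \<noteq> (T^^t) y k"] by (simp add: k_def)
  qed
  thus ?thesis by blast
qed

lemma good_rem: "good x \<Longrightarrow> \<exists>N. \<forall>n \<ge> N. x n \<noteq> centre \<and> K < rem n (x n)"
  by (simp add: good_def)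

theorem lemma3p13:
  fixes x y :: "nat \<Rightarrow> vert" and i :: nat
  assumes "x \<in> X" and "y \<in> X" and "0 < i"
    and "deg x = enat i" and "deg y = enat i"
    and "(\<lambda>n. dist_X ((T ^^ n) x) ((T ^^ n) y)) \<longlonglongrightarrow> 0"
  shows "x = y"
proof (rule ccontr)
  assume ne: "x \<noteq> y"
  have gx: "good x" using deg_good[OF assms(1) assms(4) assms(3)] .
  have gy: "good y" using deg_good[OF assms(2) assms(5) assms(3)] .
  obtain Nx where Nx: "\<And>n. n \<ge> Nx \<Longrightarrow> x n \<noteq> centre \<and> fst (x n) = i"
    using deg_info[OF assms(1) assms(4) assms(3)] by blast
  obtain Ny where Ny: "\<And>n. n \<ge> Ny \<Longrightarrow> y n \<noteq> centre \<and> fst (y n) = i"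
    using deg_info[OF assms(2) assms(5) assms(3)] by blast
  obtain ms where ms: "x ms \<noteq> y ms" using ne by blast
  have diff: "x n \<noteq> y n" if "n \<ge> ms" for n
  proof
    assume "x n = y n"
    hence "Phi (n - ms) ms (x n) = Phi (n - ms) ms (y n)" by simp
    thus False using Phi_X'[OF assms(1) that] Phi_X'[OF assms(2) that] ms by simp
  qed
  have ag: "\<And>m. \<exists>t0. \<forall>t \<ge> t0. (T^^t) x m = (T^^t) y m" using conv_agree[OF assms(6)] by blast
  obtain t2 where t2: "\<And>t. t \<ge> t2 \<Longrightarrow> (T^^t) x 2 = (T^^t) y 2" using ag[of 2] by blast
  have xpair: "x n = (i, snd (x n))" if "n \<ge> Nx" for n using Nx[OF that] by (metis prod.collapse)
  have ypair: "y n = (i, snd (y n))" if "n \<ge> Ny" for n using Ny[OF that] by (metis prod.collapse)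
  show False
  proof (cases "\<exists>T0 \<ge> t2. (T^^T0) x 2 \<noteq> centre \<and> fst ((T^^T0) x 2) = 1")
    case True
    then obtain T0 where T0: "T0 \<ge> t2" "(T^^T0) x 2 \<noteq> centre" "fst ((T^^T0) x 2) = 1" by blast
    have ag2: "\<And>t'. T0 \<le> t' \<Longrightarrow> (T^^t') x 2 = (T^^t') y 2" using t2 T0 by simp
    have all: "M \<ge> 2 \<Longrightarrow> (T^^T0) x M = (T^^T0) y M" for M
      using alpha_all_levels[OF gx gy ag2 T0(2) T0(3)] by blast
    obtain Kx where Kx: "\<And>n. n \<ge> Kx \<Longrightarrow> x n \<noteq> centre \<and> T0 < rem n (x n)" using good_rem[OF gx] by blast
    obtain Ky where Ky: "\<And>n. n \<ge> Ky \<Longrightarrow> y n \<noteq> centre \<and> T0 < rem n (y n)" using good_rem[OF gy] by blast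
    define M where "M = max (max Nx Ny) (max ms (max 2 (max Kx Ky)))"
    have MM: "Nx \<le> M" "Ny \<le> M" "ms \<le> M" "Kx \<le> M" "Ky \<le> M" "2 \<le> M"
      by (simp_all add: M_def)
    have ox: "(T^^T0) x M = (fst (x M), snd (x M) + T0)"
      using orbit_pos[OF gx, of M T0] Kx[OF MM(4)] by blast
    have oy: "(T^^T0) y M = (fst (y M), snd (y M) + T0)"
      using orbit_pos[OF gy, of M T0] Ky[OF MM(5)] by blast
    have exy: "(T^^T0) x M = (T^^T0) y M" using all[OF MM(6)] .
    have fx: "fst (x M) = i" using Nx[OF MM(1)] by blast
    have fy: "fst (y M) = i" using Ny[OF MM(2)] by blast
    have sxy: "snd (x M) = snd (y M)" using ox oy exy by simp
    have "x M = y M" using fx fy sxy by (simp add: prod_eq_iff)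
    moreover have "M \<ge> ms" by (rule MM(3))
    ultimately show False using diff by blast
  next
    case False
    hence avoid: "\<And>t. t2 \<le> t \<Longrightarrow> (T^^t) x 2 = centre \<or> fst ((T^^t) x 2) \<noteq> 1" by blast
    show False
    proof (cases "2 \<le> i")
      case True
      obtain t3 where t3: "\<And>t. t \<ge> t3 \<Longrightarrow> (T^^t) x (i+1) = (T^^t) y (i+1)" using ag[of "i+1"] by blast
      have t3': "\<And>t. t3 \<le> t \<Longrightarrow> (T^^t) y (i+1) = (T^^t) x (i+1)" using t3 by metis
      obtain Kx where Kx: "\<And>n. n \<ge> Kx \<Longrightarrow> x n \<noteq> centre \<and> t3 < rem n (x n)" using good_rem[OF gx] by blast
      obtain Ky where Ky: "\<And>n. n \<ge> Ky \<Longrightarrow> y n \<noteq> centre \<and> t3 < rem n (y n)" using good_rem[OF gy] by blast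
      define n where "n = max (max Nx Ny) (max ms (max (i+2) (max Kx Ky)))"
      have nn: "n \<ge> Nx" "n \<ge> Ny" "n \<ge> ms" "i + 2 \<le> n" "n \<ge> Kx" "n \<ge> Ky" by (auto simp add: n_def)
      have xS: "x (Suc n) = (i, snd (x (Suc n)))" using xpair nn by simp
      have yS: "y (Suc n) = (i, snd (y (Suc n)))" using ypair nn by simp
      have dS: "snd (x (Suc n)) \<noteq> snd (y (Suc n))"
        using diff[of "Suc n"] xS yS nn by (metis le_SucI)
      show False
      proof (cases "snd (x (Suc n)) < snd (y (Suc n))")
        case True
        show False
          by (rule case_ge2[OF gx gy \<open>2 \<le> i\<close> nn(4) _ _ _ _ xS yS True t3'])
             (use Nx[OF nn(1)] Ny[OF nn(2)] Kx[OF nn(5)] in auto)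
      next
        case False
        hence lt: "snd (y (Suc n)) < snd (x (Suc n))" using dS by simp
        show False
          by (rule case_ge2[OF gy gx \<open>2 \<le> i\<close> nn(4) _ _ _ _ yS xS lt t3])
             (use Nx[OF nn(1)] Ny[OF nn(2)] Ky[OF nn(6)] in auto)
      qed
    next
      case False
      hence i1: "i = 1" using assms(3) by simp
      have avoid_y: "\<And>t. t2 \<le> t \<Longrightarrow> (T^^t) y 2 = centre \<or> fst ((T^^t) y 2) \<noteq> 1"
        using avoid t2 by metis
      have t2': "\<And>t. t2 \<le> t \<Longrightarrow> (T^^t) y 2 = (T^^t) x 2" using t2 by metis
      obtain Kx where Kx: "\<And>n. n \<ge> Kx \<Longrightarrow> x n \<noteq> centre \<and> t2 < rem n (x n)" using good_rem[OF gx] by blast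
      obtain Ky where Ky: "\<And>n. n \<ge> Ky \<Longrightarrow> y n \<noteq> centre \<and> t2 < rem n (y n)" using good_rem[OF gy] by blast
      define N1 where "N1 = max (max Nx Ny) (max ms (max 3 (max Kx Ky)))"
      have N1: "N1 \<ge> Nx" "N1 \<ge> Ny" "N1 \<ge> ms" "3 \<le> N1" "N1 \<ge> Kx" "N1 \<ge> Ky" by (auto simp add: N1_def)
      have lcx: "snd (x (Suc n)) = Z n - cyclen n 1 + snd (x n)" if "n \<ge> N1" for n
      proof (rule last_copy[OF gx _ _ _ avoid])
        show "2 \<le> n" using that N1 by simp
        show "x n = (1, snd (x n))" using xpair[of n] that N1 i1 by simp
        show "x (Suc n) = (1, snd (x (Suc n)))" using xpair[of "Suc n"] that N1 i1 by simp
        show "t2 < rem n (x n)" using Kx[of n] that N1 by simp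
      qed
      have lcy: "snd (y (Suc n)) = Z n - cyclen n 1 + snd (y n)" if "n \<ge> N1" for n
      proof (rule last_copy[OF gy _ _ _ avoid_y])
        show "2 \<le> n" using that N1 by simp
        show "y n = (1, snd (y n))" using ypair[of n] that N1 i1 by simp
        show "y (Suc n) = (1, snd (y (Suc n)))" using ypair[of "Suc n"] that N1 i1 by simp
        show "t2 < rem n (y n)" using Ky[of n] that N1 by simp
      qed
      have gen: "\<And>u v. good u \<Longrightarrow> good v \<Longrightarrow>
          (\<And>n. n \<ge> N1 \<Longrightarrow> u n = (1, snd (u n)) \<and> v n = (1, snd (v n))) \<Longrightarrow>
          (\<And>n. n \<ge> N1 \<Longrightarrow> snd (u (Suc n)) = Z n - cyclen n 1 + snd (u n)) \<Longrightarrow>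
          (\<And>n. n \<ge> N1 \<Longrightarrow> snd (v (Suc n)) = Z n - cyclen n 1 + snd (v n)) \<Longrightarrow>
          (\<And>t. t2 \<le> t \<Longrightarrow> (T^^t) v 2 = (T^^t) u 2) \<Longrightarrow>
          (\<And>n. n \<ge> N1 \<Longrightarrow> t2 < rem n (u n)) \<Longrightarrow>
          snd (u N1) < snd (v N1) \<Longrightarrow> False"
      proof -
        fix u v
        assume gu: "good u" and gv: "good v"
          and pr: "\<And>n. n \<ge> N1 \<Longrightarrow> u n = (1, snd (u n)) \<and> v n = (1, snd (v n))"
          and lu: "\<And>n. n \<ge> N1 \<Longrightarrow> snd (u (Suc n)) = Z n - cyclen n 1 + snd (u n)"
          and lv: "\<And>n. n \<ge> N1 \<Longrightarrow> snd (v (Suc n)) = Z n - cyclen n 1 + snd (v n)"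
          and agv: "\<And>t. t2 \<le> t \<Longrightarrow> (T^^t) v 2 = (T^^t) u 2"
          and ru: "\<And>n. n \<ge> N1 \<Longrightarrow> t2 < rem n (u n)"
          and lt0: "snd (u N1) < snd (v N1)"
        define D0 where "D0 = snd (v N1) - snd (u N1)"
        have inv: "n \<ge> N1 \<Longrightarrow> snd (u n) < snd (v n) \<and> snd (v n) - snd (u n) = D0" for n
        proof (induction n rule: dec_induct)
          case base thus ?case using lt0 by (simp add: D0_def)
        next
          case (step n) thus ?case using lu[of n] lv[of n] by simp
        qed
        define n where "n = max N1 D0"
        have nN: "n \<ge> N1" "n \<ge> D0" "n \<ge> 3" using N1 by (auto simp add: n_def)
        have cn: "cyclen n n \<ge> n + 1" using cyclen_ge[of n n] nN by simp
        show False
        proof (rule case_beta[OF gu gv nN(3)])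
          show "u n = (1, snd (u n))" "v n = (1, snd (v n))" using pr nN by auto
          show "u (Suc n) = (1, Z n - cyclen n 1 + snd (u n))" using pr[of "Suc n"] lu[of n] nN by simp
          show "v (Suc n) = (1, Z n - cyclen n 1 + snd (v n))" using pr[of "Suc n"] lv[of n] nN by simp
          show "snd (u n) < snd (v n)" using inv nN by simp
          show "snd (v n) - snd (u n) \<le> 2 * cyclen n n" using inv[of n] nN cn by simp
          show "\<And>t. t2 \<le> t \<Longrightarrow> (T^^t) v 2 = (T^^t) u 2" by (rule agv)
          show "t2 < rem n (u n)" using ru nN by simp
        qed
      qed
      have prxy: "\<And>n. n \<ge> N1 \<Longrightarrow> x n = (1, snd (x n)) \<and> y n = (1, snd (y n))"
        using xpair ypair N1 i1 by simp
      have pryx: "\<And>n. n \<ge> N1 \<Longrightarrow> y n = (1, snd (y n)) \<and> x n = (1, snd (x n))"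
        using prxy by blast
      have "snd (x N1) \<noteq> snd (y N1)"
        using diff[of N1] prxy[of N1] N1 by (metis order_refl)
      hence "snd (x N1) < snd (y N1) \<or> snd (y N1) < snd (x N1)" by linarith
      thus False
      proof
        assume "snd (x N1) < snd (y N1)"
        moreover have "\<And>n. n \<ge> N1 \<Longrightarrow> t2 < rem n (x n)" using Kx N1(5) by (meson le_trans)
        ultimately show False using gen[OF gx gy prxy lcx lcy t2'] by blast
      next
        assume "snd (y N1) < snd (x N1)"
        moreover have "\<And>n. n \<ge> N1 \<Longrightarrow> t2 < rem n (y n)" using Ky N1(6) by (meson le_trans)
        moreover have "\<And>t. t2 \<le> t \<Longrightarrow> (T^^t) x 2 = (T^^t) y 2" using t2 by blast
        ultimately show False using gen[OF gy gx pryx lcy lcx] by blast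
      qed
    qed
  qed
qed

end
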